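(* Let $\phi^\sharp:\mathcal{O}(\mathbb{R}^{m|2n})\to\mathcal{O}(\mathbb{R}^{m|2n}_0)$ be $\phi^\sharp(f)=\sum_{j=0}^n\frac{(-1)^j\theta^{2j}}{j!}\left(\frac{\partial}{\partial r^2}\right)^jf$. Then, as operators on $\mathcal{O}(\mathbb{R}^{m|2n})$, for $1\le j\le m$ resp. $1\le j\le 2n$: $\phi^\sharp\circ x_j=x_j\sqrt{1-\frac{\theta^2}{r^2}}\,\phi^\sharp$, $\phi^\sharp\circ\grave{x}_j=\grave{x}_j\,\phi^\sharp$, $\phi^\sharp\circ\partial_{x_j}=\frac{1}{\sqrt{1-\theta^2/r^2}}\partial_{x_j}\phi^\sharp-\frac{x_j\theta^2}{r^3\sqrt{1-\theta^2/r^2}}\partial_r\phi^\sharp$, and $\phi^\sharp\circ\partial_{\grave{x}_j}=\partial_{\grave{x}_j}\phi^\sharp-\frac{\grave{x}^j}{r}\partial_r\phi^\sharp$.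
   Context: $\mathcal{O}(\mathbb{R}^{m|2n})=\mathcal{C}^\infty(\mathbb{R}^m)\otimes\Lambda_{2n}$, $\mathbb{R}^{m|2n}_0$ the same over $\mathbb{R}^m\setminus\{0\}$. $r=|\underline{x}|$, $\partial_r=\sum_i\frac{x_i}{r}\partial_{x_i}$, $\frac{\partial}{\partial r^2}=\frac1{2r}\partial_r$, acting coefficientwise on the Grassmann expansion. $\theta^2=-\sum_{k=1}^n\grave{x}_{2k-1}\grave{x}_{2k}$; $\sqrt{1-\theta^2/r^2}$ and its inverse are defined by finite Taylor expansion. $\grave{x}^{2k-1}=\frac12\grave{x}_{2k}$, $\grave{x}^{2k}=-\frac12\grave{x}_{2k-1}$. Multiplication by coordinates is understood as an operator. *)

theory Defs
  imports "HOL-Analysis.Analysis"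
begin

text \<open>Superfunctions on R^{m|2n}: a Grassmann expansion
  f = sum over A subseteq {1..2n} of f_A(x) x`_A, where x`_A is the ordered product
  of the odd generators with indices in A (increasing order).\<close>

type_synonym 'm sfun = "nat set \<Rightarrow> real^'m \<Rightarrow> real"

definition pd :: "'m::finite \<Rightarrow> (real^'m \<Rightarrow> real) \<Rightarrow> real^'m \<Rightarrow> real" where
  "pd j g x = deriv (\<lambda>t. g (x + t *\<^sub>R axis j 1)) 0"

definition smooth_fun :: "(real^'m::finite \<Rightarrow> real) \<Rightarrow> bool" where
  "smooth_fun g \<longleftrightarrow> (\<forall>js. (foldr pd js g) differentiable_on UNIV)"

definition superfun :: "nat \<Rightarrow> 'm::finite sfun \<Rightarrow> bool" where
  "superfun n f \<longleftrightarrow> (\<forall>A. (A \<subseteq> {1..2*n} \<longrightarrow> smooth_fun (f A))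
                        \<and> (\<not> A \<subseteq> {1..2*n} \<longrightarrow> f A = (\<lambda>x. 0)))"

text \<open>Sign of x`_A x`_B = ssign A B * x`_{A union B} for disjoint A, B.\<close>
definition ssign :: "nat set \<Rightarrow> nat set \<Rightarrow> real" where
  "ssign A B = (-1) ^ card {(a, b). a \<in> A \<and> b \<in> B \<and> b < a}"

definition smult :: "'m sfun \<Rightarrow> 'm sfun \<Rightarrow> 'm sfun" where
  "smult f g C x = (\<Sum>A\<in>Pow C. ssign A (C - A) * f A x * g (C - A) x)"

definition sone :: "'m sfun" where
  "sone A x = (if A = {} then 1 else 0)"

definition spow :: "'m sfun \<Rightarrow> nat \<Rightarrow> 'm sfun" where
  "spow f k = (smult f ^^ k) sone"

definition gen :: "nat \<Rightarrow> 'm sfun" where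
  "gen j A x = (if A = {j} then 1 else 0)"

definition theta2 :: "nat \<Rightarrow> 'm sfun" where
  "theta2 n A x = - (\<Sum>k=1..n. smult (gen (2*k-1)) (gen (2*k)) A x)"

text \<open>x`^{2k-1} = 1/2 x`_{2k},  x`^{2k} = -1/2 x`_{2k-1}.\<close>
definition gup :: "nat \<Rightarrow> 'm sfun" where
  "gup j A x = (if odd j then 1/2 * gen (j+1) A x else - 1/2 * gen (j-1) A x)"

definition sxmul :: "'m::finite \<Rightarrow> 'm sfun \<Rightarrow> 'm sfun" where
  "sxmul j f A x = x$j * f A x"

definition epd :: "'m::finite \<Rightarrow> 'm sfun \<Rightarrow> 'm sfun" where
  "epd j f A = pd j (f A)"

definition oder :: "nat \<Rightarrow> 'm sfun \<Rightarrow> 'm sfun" where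
  "oder j f B x = (if j \<in> B then 0 else (-1) ^ card {b\<in>B. b < j} * f (insert j B) x)"

definition dr :: "'m::finite sfun \<Rightarrow> 'm sfun" where
  "dr f A x = (\<Sum>i\<in>UNIV. x$i / norm x * pd i (f A) x)"

definition dr2 :: "'m::finite sfun \<Rightarrow> 'm sfun" where
  "dr2 f A x = 1 / (2 * norm x) * dr f A x"

text \<open>sqrt(1 - theta^2/r^2) and its inverse via finite Taylor expansion
  (theta^{2(n+1)} = 0).\<close>
definition sqrtfac :: "nat \<Rightarrow> 'm::finite sfun" where
  "sqrtfac n A x = (\<Sum>k=0..n. ((1/2::real) gchoose k) * (-1)^k / (norm x)^(2*k)
                       * spow (theta2 n) k A x)"

definition isqrtfac :: "nat \<Rightarrow> 'm::finite sfun" where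
  "isqrtfac n A x = (\<Sum>k=0..n. ((-1/2::real) gchoose k) * (-1)^k / (norm x)^(2*k)
                       * spow (theta2 n) k A x)"

definition phi :: "nat \<Rightarrow> 'm::finite sfun \<Rightarrow> 'm sfun" where
  "phi n f A x = (\<Sum>j=0..n. (-1)^j / fact j * smult (spow (theta2 n) j) ((dr2 ^^ j) f) A x)"

end

theory Submission
  imports Defs
begin


definition sinv :: "nat set \<Rightarrow> nat set \<Rightarrow> nat" where
  "sinv A B = card {(a,b). a\<in>A \<and> b\<in>B \<and> b<a}"

lemma ssign_inv: "ssign A B = (-1)^sinv A B" by (simp add: ssign_def sinv_def)

lemma sinv_fin: "finite A \<Longrightarrow> finite B \<Longrightarrow> finite {(a,b). a\<in>A \<and> b\<in>B \<and> (P a b)}"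
  by (rule finite_subset[of _ "A\<times>B"]) auto

lemma sinv_Un_left:
  assumes "finite A" "finite B" "finite C" "A\<inter>B={}"
  shows "sinv (A\<union>B) C = sinv A C + sinv B C"
proof -
  have "{(a,b). a\<in>A\<union>B \<and> b\<in>C \<and> b<a} = {(a,b). a\<in>A \<and> b\<in>C \<and> b<a} \<union> {(a,b). a\<in>B \<and> b\<in>C \<and> b<a}" by auto
  then show ?thesis unfolding sinv_def using assms
    by (simp add: card_Un_disjoint sinv_fin disjoint_iff) 
qed

lemma sinv_Un_right:
  assumes "finite A" "finite B" "finite C" "B\<inter>C={}"
  shows "sinv A (B\<union>C) = sinv A B + sinv A C"
proof -
  have "{(a,b). a\<in>A \<and> b\<in>B\<union>C \<and> b<a} = {(a,b). a\<in>A \<and> b\<in>B \<and> b<a} \<union> {(a,b). a\<in>A \<and> b\<in>C \<and> b<a}" by auto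
  then show ?thesis unfolding sinv_def using assms
    by (simp add: card_Un_disjoint sinv_fin disjoint_iff) 
qed

lemma sinv_swap:
  assumes "finite A" "finite B" "A\<inter>B={}"
  shows "sinv A B + sinv B A = card A * card B"
proof -
  have e1: "{(b,a). b\<in>B \<and> a\<in>A \<and> a<b} = prod.swap ` {(a,b). a\<in>A \<and> b\<in>B \<and> a<b}" by auto
  have c1: "sinv B A = card {(a,b). a\<in>A \<and> b\<in>B \<and> a<b}"
    unfolding sinv_def e1 by (rule card_image) simp
  have "A \<times> B = {(a,b). a\<in>A \<and> b\<in>B \<and> b<a} \<union> {(a,b). a\<in>A \<and> b\<in>B \<and> a<b}"
    using assms(3) by (auto simp: disjoint_iff) (metis linorder_neqE_nat)
  then have "card (A\<times>B) = sinv A B + card {(a,b). a\<in>A \<and> b\<in>B \<and> a<b}"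
    unfolding sinv_def using assms by (simp add: card_Un_disjoint sinv_fin disjoint_iff)
  then show ?thesis using c1 by (simp add: card_cartesian_product)
qed

lemma sinv_single_left: "finite B \<Longrightarrow> sinv {j} B = card {b\<in>B. b<j}"
proof -
  have "{(a,b). a\<in>{j} \<and> b\<in>B \<and> b<a} = (\<lambda>b. (j,b)) ` {b\<in>B. b<j}" by auto
  then show "sinv {j} B = card {b\<in>B. b<j}" unfolding sinv_def
    by (simp add: card_image inj_on_def)
qed

lemma sinv_single_right: "finite A \<Longrightarrow> sinv A {j} = card {a\<in>A. j<a}"
proof -
  have "{(a,b). a\<in>A \<and> b\<in>{j} \<and> b<a} = (\<lambda>a. (a,j)) ` {a\<in>A. j<a}" by auto
  then show ?thesis unfolding sinv_def
    by (simp add: card_image inj_on_def)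
qed

lemma m1pow: "(-1::real)^a = (if even a then 1 else -1)"
  by (simp add: minus_one_power_iff)

lemma m1pow_eq: "even (a + b) \<Longrightarrow> (-1::real)^a = (-1)^b"
  by (auto simp: m1pow)

lemma smult_infinite: "infinite C \<Longrightarrow> smult f g C x = 0"
  by (simp add: smult_def)

lemma sign_assoc:
  assumes "finite C" "A \<subseteq> C" "B \<subseteq> C - A"
  shows "ssign (A\<union>B) (C-(A\<union>B)) * ssign A B = ssign A (C-A) * ssign B (C-A-B)"
proof -
  define C' where "C' = C-A-B"
  have fA: "finite A" "finite B" "finite C'" using assms unfolding C'_def
    by (auto intro: finite_subset[of B C] finite_subset[of A C])
  have e: "C - (A\<union>B) = C'" unfolding C'_def by auto
  have e2: "C - A = B \<union> C'" using assms unfolding C'_def by auto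
  have e3: "C - A - B = C'" unfolding C'_def by simp
  have h1: "sinv (A\<union>B) C' = sinv A C' + sinv B C'"
    using fA assms by (intro sinv_Un_left) auto
  have h2: "sinv A (B \<union> C') = sinv A B + sinv A C'"
    using fA unfolding C'_def by (intro sinv_Un_right) auto
  have l: "ssign (A\<union>B) C' * ssign A B = (-1)^(sinv A B + sinv A C' + sinv B C')"
    unfolding ssign_inv h1 by (simp add: power_add[symmetric] algebra_simps)
  have r: "ssign A (B \<union> C') * ssign B C' = (-1)^(sinv A B + sinv A C' + sinv B C')"
    unfolding ssign_inv h2 by (simp add: power_add[symmetric] algebra_simps)
  have e4: "B \<union> C' - B = C'" using assms unfolding C'_def by auto
  show ?thesis using l r unfolding e e2 e4 by simp
qed

lemma assoc_term:
  assumes "finite C" "D \<subseteq> C" "A \<subseteq> D"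
  shows "ssign A (C - A) * (ssign (D - A) (C - A - (D - A)) * h (C - A - (D - A)) x)
       = ssign D (C - D) * (ssign A (D - A) * h (C - D) x)"
proof -
  have e1: "C - A - (D - A) = C - D" using assms by auto
  have "ssign (A\<union>(D-A)) (C-(A\<union>(D-A))) * ssign A (D-A) = ssign A (C-A) * ssign (D-A) (C-A-(D-A))"
    using assms by (intro sign_assoc) auto
  moreover have "A \<union> (D-A) = D" using assms by auto
  ultimately show ?thesis unfolding e1 by (simp add: algebra_simps)
qed

lemma smult_assoc: "smult (smult f g) h C x = smult f (smult g h) C x"
proof (cases "finite C")
  case False then show ?thesis by (simp add: smult_infinite)
next
  case True
  have L: "smult (smult f g) h C x = (\<Sum>(D,A)\<in>Sigma (Pow C) Pow. 
     ssign D (C - D) * ssign A (D - A) * f A x * g (D - A) x * h (C - D) x)"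
    unfolding smult_def using True
    by (subst sum.Sigma[symmetric]) (auto simp: sum_distrib_left sum_distrib_right algebra_simps intro: finite_subset intro!: sum.cong)
  have R: "smult f (smult g h) C x = (\<Sum>(A,B)\<in>Sigma (Pow C) (\<lambda>A. Pow (C-A)). 
     ssign A (C - A) * ssign B (C - A - B) * f A x * g B x * h (C - A - B) x)"
    unfolding smult_def using True
    by (subst sum.Sigma[symmetric]) (auto simp: sum_distrib_left sum_distrib_right algebra_simps intro!: sum.cong)
  show ?thesis unfolding L R
    apply (rule sum.reindex_bij_witness[where i="\<lambda>(A,B). (A\<union>B, A)" and j="\<lambda>(D,A). (A, D-A)"])
    using True by (auto simp: assoc_term)
qed

lemma ssign_empty1[simp]: "ssign {} B = 1" by (simp add: ssign_def)
lemma ssign_empty2[simp]: "ssign A {} = 1" by (simp add: ssign_def)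

lemma smult_cong_l: "(\<And>C. F C x = F' C x) \<Longrightarrow> smult F G C x = smult F' G C x"
  by (simp add: smult_def)
lemma smult_cong_r: "(\<And>C. G C x = G' C x) \<Longrightarrow> smult F G C x = smult F G' C x"
  by (simp add: smult_def)

lemma smult_sum_r: "(\<And>C. G C x = (\<Sum>k\<in>K. a k * H k C x)) \<Longrightarrow>
   smult F G C x = (\<Sum>k\<in>K. a k * smult F (H k) C x)"
  unfolding smult_def by (simp add: sum_distrib_left sum_distrib_right algebra_simps sum.swap[of _ K])

lemma smult_sum_l: "(\<And>C. F C x = (\<Sum>k\<in>K. a k * H k C x)) \<Longrightarrow>
   smult F G C x = (\<Sum>k\<in>K. a k * smult (H k) G C x)"
  unfolding smult_def by (simp add: sum_distrib_left sum_distrib_right algebra_simps sum.swap[of _ K])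

lemma smult_scal_r: "(\<And>C. G C x = c * H C x) \<Longrightarrow> smult F G C x = c * smult F H C x"
  unfolding smult_def by (simp add: sum_distrib_left algebra_simps)
lemma smult_scal_l: "(\<And>C. F C x = c * H C x) \<Longrightarrow> smult F G C x = c * smult H G C x"
  unfolding smult_def by (simp add: sum_distrib_left algebra_simps)
lemma smult_diff_r: assumes h: "\<And>C. G C x = G1 C x - G2 C x" shows "smult F G C x = smult F G1 C x - smult F G2 C x"
  unfolding smult_def h by (simp add: sum_subtractf[symmetric] algebra_simps)
lemma smult_add_r: assumes h: "\<And>C. G C x = G1 C x + G2 C x" shows "smult F G C x = smult F G1 C x + smult F G2 C x"
  unfolding smult_def h by (simp add: sum.distrib[symmetric] algebra_simps)
lemma smult_zero_r: "(\<And>C. G C x = 0) \<Longrightarrow> smult F G C x = 0"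
  unfolding smult_def by simp
lemma smult_zero_l: "(\<And>C. F C x = 0) \<Longrightarrow> smult F G C x = 0"
  unfolding smult_def by simp

definition fsupp :: "'m sfun \<Rightarrow> bool" where
  "fsupp F \<longleftrightarrow> (\<forall>C x. infinite C \<longrightarrow> F C x = 0)"

lemma sone_smult: "fsupp G \<Longrightarrow> smult sone G C x = G C x"
proof (cases "finite C")
  case True
  have "smult sone G C x = (\<Sum>A\<in>Pow C. if A = {} then G C x else 0)"
    unfolding smult_def sone_def by (intro sum.cong) auto
  also have "\<dots> = G C x" using True by (subst sum.delta) auto
  finally show ?thesis .
qed (auto simp: fsupp_def smult_infinite)

lemma smult_sone: "fsupp G \<Longrightarrow> smult G sone C x = G C x"
proof (cases "finite C")
  case True
  have "smult G sone C x = (\<Sum>A\<in>Pow C. if A = C then G C x else 0)"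
    unfolding smult_def sone_def by (intro sum.cong) auto
  also have "\<dots> = G C x" using True by (subst sum.delta) auto
  finally show ?thesis .
qed (auto simp: fsupp_def smult_infinite)

lemma fsupp_smult: "fsupp (smult F G)" by (simp add: fsupp_def smult_infinite)

definition supp :: "'m sfun \<Rightarrow> nat \<Rightarrow> nat set \<Rightarrow> bool" where
  "supp F a S \<longleftrightarrow> (\<forall>C x. F C x \<noteq> 0 \<longrightarrow> finite C \<and> card C = a \<and> C \<subseteq> S)"

lemma supp_fsupp: "supp F a S \<Longrightarrow> fsupp F"
  unfolding supp_def fsupp_def by blast

lemma supp_smult:
  assumes "supp F a S" "supp G b S"
  shows "supp (smult F G) (a+b) S"
  unfolding supp_def
proof (intro allI impI)
  fix C x assume ne: "smult F G C x \<noteq> 0"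
  then have fC: "finite C" using smult_infinite by blast
  from ne obtain A where A: "A \<in> Pow C" "ssign A (C-A) * F A x * G (C-A) x \<noteq> 0"
    unfolding smult_def by (meson sum.neutral)
  then have "F A x \<noteq> 0" "G (C-A) x \<noteq> 0" by auto
  then have "card A = a" "card (C-A) = b" "A \<subseteq> S" "C - A \<subseteq> S" using assms unfolding supp_def by auto
  moreover have "card C = card A + card (C-A)" using A fC
    by (metis Diff_partition Diff_disjoint PowD card_Un_disjoint finite_Diff finite_subset)
  ultimately show "finite C \<and> card C = a + b \<and> C \<subseteq> S" using fC by auto
qed

lemma supp_sone: "supp sone 0 S" unfolding supp_def sone_def by auto
lemma supp_gen: "j \<in> S \<Longrightarrow> supp (gen j) 1 S" unfolding supp_def gen_def by auto
lemma supp_mono: "supp F a S \<Longrightarrow> S \<subseteq> S' \<Longrightarrow> supp F a S'" unfolding supp_def by blast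

lemma supp_sum: "(\<And>k. k\<in>K \<Longrightarrow> supp (F k) a S) \<Longrightarrow> supp (\<lambda>C x. \<Sum>k\<in>K. c k * F k C x) a S"
  unfolding supp_def by (metis (mono_tags, lifting) mult_zero_right sum.neutral)
lemma supp_scal: "supp F a S \<Longrightarrow> supp (\<lambda>C x. c * F C x) a S"
  unfolding supp_def by auto

lemma supp_theta2: "supp (theta2 n) 2 {1..2*n}"
proof -
  have "supp (\<lambda>C x. \<Sum>k\<in>{1..n}. (-1) * smult (gen (2*k-1)) (gen (2*k)) C x) (1+1) {1..2*n}"
    by (intro supp_sum supp_smult supp_gen) auto
  then show ?thesis unfolding theta2_def one_add_one by (simp add: sum_negf)
qed

lemma spow_Suc: "spow F (Suc k) = smult F (spow F k)" by (simp add: spow_def)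
lemma spow_0: "spow F 0 = sone" by (simp add: spow_def)

lemma supp_spow: "supp (spow (theta2 n) k) (2*k) {1..2*n}"
proof (induction k)
  case 0 then show ?case by (simp add: spow_0 supp_sone)
next
  case (Suc k)
  show ?case unfolding spow_Suc using supp_smult[OF supp_theta2 Suc] by simp
qed

lemma supp_zero: "supp F a S \<Longrightarrow> finite S \<Longrightarrow> card S < a \<Longrightarrow> F C x = 0"
  unfolding supp_def using card_mono leD by metis

lemma spow_vanish: "n < k \<Longrightarrow> spow (theta2 n) k C x = 0"
  by (rule supp_zero[OF supp_spow]) auto

lemma smult_comm:
  assumes "supp F a S" "even a"
  shows "smult F G C x = smult G F C x"
proof (cases "finite C")
  case True
  show ?thesis unfolding smult_def
  proof (rule sum.reindex_bij_witness[where i="\<lambda>A. C - A" and j="\<lambda>A. C - A"])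
    fix A assume A: "A \<in> Pow C"
    show "C - (C - A) = A" "C - A \<in> Pow C" using A by auto
    have cc: "C - (C - A) = A" using A by auto
    show "ssign (C - A) (C - (C - A)) * G (C - A) x * F (C - (C - A)) x = ssign A (C - A) * F A x * G (C - A) x"
    proof (cases "F A x = 0")
      case False
      then have ev: "even (card A)" using assms unfolding supp_def by auto
      have fin: "finite A" "finite (C-A)" using A True finite_subset by auto
      have "sinv A (C-A) + sinv (C-A) A = card A * card (C-A)" using fin by (intro sinv_swap) auto
      then have "ssign (C-A) A = ssign A (C-A)" unfolding ssign_inv using ev
        by (intro m1pow_eq) (metis add.commute even_add even_mult_iff)
      moreover have "C - (C - A) = A" using A by auto
      ultimately show ?thesis by simp
    qed (simp add: cc)
  qed auto
qed (simp add: smult_infinite)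

lemma fsupp_spow: "fsupp (spow (theta2 n) k)" using supp_spow supp_fsupp by blast

lemma spow_add: "smult (spow (theta2 n) a) (spow (theta2 n) b) C x = spow (theta2 n) (a+b) C x"
proof (induction a arbitrary: C)
  case 0 then show ?case by (simp add: spow_0 sone_smult fsupp_spow)
next
  case (Suc a)
  have "smult (spow (theta2 n) (Suc a)) (spow (theta2 n) b) C x
      = smult (theta2 n) (smult (spow (theta2 n) a) (spow (theta2 n) b)) C x"
    unfolding spow_Suc by (rule smult_assoc)
  also have "\<dots> = smult (theta2 n) (spow (theta2 n) (a+b)) C x"
    by (rule smult_cong_r) (rule Suc.IH)
  finally show ?case by (simp add: spow_Suc)
qed

definition cnt :: "nat set \<Rightarrow> nat \<Rightarrow> nat" where "cnt X j = card {b\<in>X. b<j}"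

lemma oder_eq: "oder j f B x = (if j \<in> B then 0 else (-1)^cnt B j * f (insert j B) x)"
  by (simp add: oder_def cnt_def)

lemma cnt_Un: "finite A \<Longrightarrow> finite B \<Longrightarrow> A \<inter> B = {} \<Longrightarrow> cnt (A\<union>B) j = cnt A j + cnt B j"
proof -
  assume a: "finite A" "finite B" "A \<inter> B = {}"
  have "{b\<in>A\<union>B. b<j} = {b\<in>A. b<j} \<union> {b\<in>B. b<j}" by auto
  then show ?thesis unfolding cnt_def using a by (simp add: card_Un_disjoint disjoint_iff)
qed

lemma card_split: "finite A \<Longrightarrow> j \<notin> A \<Longrightarrow> card {a\<in>A. j<a} + cnt A j = card A"
proof -
  assume a: "finite A" "j \<notin> A"
  have "A = {a\<in>A. j<a} \<union> {a\<in>A. a<j}" using a by auto (metis linorder_neqE_nat)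
  then have "card A = card ({a\<in>A. j<a} \<union> {a\<in>A. a<j})" by simp
  also have "\<dots> = card {a\<in>A. j<a} + card {a\<in>A. a<j}" using a by (intro card_Un_disjoint) auto
  finally show ?thesis by (simp add: cnt_def)
qed

lemma sinv_ins_left: "finite A \<Longrightarrow> finite R \<Longrightarrow> j \<notin> A \<Longrightarrow> sinv (insert j A) R = sinv A R + cnt R j"
proof -
  assume a: "finite A" "finite R" "j \<notin> A"
  have "sinv ({j} \<union> A) R = sinv {j} R + sinv A R" using a by (intro sinv_Un_left) auto
  then show ?thesis using sinv_single_left[OF a(2)] by (simp add: cnt_def)
qed

lemma sinv_ins_right: "finite A \<Longrightarrow> finite R \<Longrightarrow> j \<notin> R \<Longrightarrow> sinv A (insert j R) = sinv A R + card {a\<in>A. j<a}"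
proof -
  assume a: "finite A" "finite R" "j \<notin> R"
  have "sinv A (R \<union> {j}) = sinv A R + sinv A {j}" using a by (intro sinv_Un_right) auto
  then show ?thesis using sinv_single_right[OF a(1)] by simp
qed

lemma sum_Pow_insert: "finite B \<Longrightarrow> j \<notin> B \<Longrightarrow>
   (\<Sum>A\<in>Pow (insert j B). h A) = (\<Sum>A\<in>Pow B. h A) + (\<Sum>A\<in>Pow B. h (insert j A))"
proof -
  assume a: "finite B" "j \<notin> B"
  have "(\<Sum>A\<in>Pow (insert j B). h A) = (\<Sum>A\<in>Pow B \<union> insert j ` Pow B. h A)" by (simp add: Pow_insert)
  also have "\<dots> = (\<Sum>A\<in>Pow B. h A) + (\<Sum>A\<in>insert j ` Pow B. h A)"
    using a by (intro sum.union_disjoint) auto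
  also have "(\<Sum>A\<in>insert j ` Pow B. h A) = (\<Sum>A\<in>Pow B. h (insert j A))"
  proof (rule sum.reindex[unfolded comp_def])
    show "inj_on (insert j) (Pow B)" using a unfolding inj_on_def
      by (metis PowD Set.set_insert insert_ident subsetD)
  qed
  finally show ?thesis .
qed

lemma sign1:
  assumes "finite B" "j \<notin> B" "A \<subseteq> B"
  shows "(-1::real)^cnt B j * ssign (insert j A) (B - A) = ssign A (B-A) * (-1)^cnt A j"
proof -
  have f: "finite A" "finite (B-A)" using assms finite_subset by auto
  have e1: "sinv (insert j A) (B-A) = sinv A (B-A) + cnt (B-A) j"
    using f assms by (intro sinv_ins_left) auto
  have e2: "cnt B j = cnt A j + cnt (B-A) j"
    using cnt_Un[OF f, of j] assms by (simp add: Un_absorb1 Un_Diff_cancel)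
  show ?thesis unfolding ssign_inv e1 e2 power_add[symmetric]
    by (rule m1pow_eq) (simp; blast)
qed

lemma sign2:
  assumes "finite B" "j \<notin> B" "A \<subseteq> B" "even (card A)"
  shows "(-1::real)^cnt B j * ssign A (insert j (B - A)) = ssign A (B-A) * (-1)^cnt (B-A) j"
proof -
  have f: "finite A" "finite (B-A)" using assms finite_subset by auto
  have e1: "sinv A (insert j (B-A)) = sinv A (B-A) + card {a\<in>A. j<a}"
    using f assms by (intro sinv_ins_right) auto
  have e2: "cnt B j = cnt A j + cnt (B-A) j"
    using cnt_Un[OF f, of j] assms by (simp add: Un_absorb1 Un_Diff_cancel)
  have e3: "card {a\<in>A. j<a} + cnt A j = card A" using f assms by (intro card_split) auto
  show ?thesis unfolding ssign_inv e1 e2 power_add[symmetric]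
    by (rule m1pow_eq) (use e3 assms(4) in presburger)
qed

lemma sign3:
  assumes "finite B0" "j \<notin> B0" "A \<subseteq> B0" "odd (card A)"
  shows "ssign A (insert j (B0 - A)) * (-1::real)^cnt A j + ssign (insert j A) (B0 - A) * (-1)^cnt (B0 - A) j = 0"
proof -
  have f: "finite A" "finite (B0-A)" using assms finite_subset by auto
  have e1: "sinv A (insert j (B0-A)) = sinv A (B0-A) + card {a\<in>A. j<a}"
    using f assms by (intro sinv_ins_right) auto
  have e2: "sinv (insert j A) (B0-A) = sinv A (B0-A) + cnt (B0-A) j"
    using f assms by (intro sinv_ins_left) auto
  have e3: "card {a\<in>A. j<a} + cnt A j = card A" using f assms by (intro card_split) auto
  have "(-1::real)^(sinv A (B0-A) + card {a\<in>A. j<a} + cnt A j) = - ((-1)^(sinv A (B0-A) + cnt (B0-A) j + cnt (B0-A) j))"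
    unfolding m1pow using e3 assms(4) by auto presburger+
  then show ?thesis unfolding ssign_inv e1 e2 power_add[symmetric] by (simp add: add.assoc)
qed

lemma oder_smult:
  assumes sF: "supp F a S" and ev: "even a"
  shows "oder j (smult F G) B x = smult (oder j F) G B x + smult F (oder j G) B x"
proof (cases "finite B")
  case False then show ?thesis by (simp add: oder_eq smult_infinite)
next
  case fB: True
  show ?thesis
  proof (cases "j \<in> B")
    case False
    have L: "oder j (smult F G) B x = (-1)^cnt B j *
       ((\<Sum>A\<in>Pow B. ssign A (insert j B - A) * F A x * G (insert j B - A) x)
       + (\<Sum>A\<in>Pow B. ssign (insert j A) (insert j B - insert j A) * F (insert j A) x * G (insert j B - insert j A) x))"
      using False fB by (simp add: oder_eq smult_def sum_Pow_insert)
    have R1: "smult (oder j F) G B x = (\<Sum>A\<in>Pow B. (-1)^cnt B j * (ssign (insert j A) (insert j B - insert j A) * F (insert j A) x * G (insert j B - insert j A) x))"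
      unfolding smult_def
    proof (rule sum.cong[OF refl])
      fix A assume A: "A \<in> Pow B"
      then have jA: "j \<notin> A" using False by auto
      have e: "insert j B - insert j A = B - A" using False by auto
      show "ssign A (B - A) * oder j F A x * G (B - A) x = (-1)^cnt B j * (ssign (insert j A) (insert j B - insert j A) * F (insert j A) x * G (insert j B - insert j A) x)"
        unfolding e using sign1[OF fB False, of A] A jA by (simp add: oder_eq algebra_simps)
    qed
    have R2: "smult F (oder j G) B x = (\<Sum>A\<in>Pow B. (-1)^cnt B j * (ssign A (insert j B - A) * F A x * G (insert j B - A) x))"
      unfolding smult_def
    proof (rule sum.cong[OF refl])
      fix A assume A: "A \<in> Pow B"
      have e: "insert j B - A = insert j (B - A)" using False A by auto
      show "ssign A (B - A) * F A x * oder j G (B - A) x = (-1)^cnt B j * (ssign A (insert j B - A) * F A x * G (insert j B - A) x)"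
      proof (cases "F A x = 0")
        case False2: False
        then have "even (card A)" using sF ev unfolding supp_def by auto
        then show ?thesis unfolding e using sign2[OF fB False, of A] A False by (simp add: oder_eq algebra_simps)
      qed simp
    qed
    show ?thesis unfolding L R1 R2 by (simp add: sum_distrib_left algebra_simps)
  next
    case True
    define B0 where "B0 = B - {j}"
    have B: "B = insert j B0" "j \<notin> B0" "finite B0" using True fB unfolding B0_def by auto
    have R1: "smult (oder j F) G B x = (\<Sum>A\<in>Pow B0. ssign A (insert j (B0 - A)) * (-1)^cnt A j * F (insert j A) x * G (insert j (B0 - A)) x)"
    proof -
      have "smult (oder j F) G B x = (\<Sum>A\<in>Pow B0. ssign A (B - A) * oder j F A x * G (B - A) x)
         + (\<Sum>A\<in>Pow B0. ssign (insert j A) (B - insert j A) * oder j F (insert j A) x * G (B - insert j A) x)"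
        unfolding smult_def by (subst B(1), subst sum_Pow_insert[OF B(3,2)], simp add: B(1)[symmetric])
      also have "\<dots> = (\<Sum>A\<in>Pow B0. ssign A (B - A) * oder j F A x * G (B - A) x)"
        by (simp add: oder_eq)
      also have "\<dots> = (\<Sum>A\<in>Pow B0. ssign A (insert j (B0 - A)) * (-1)^cnt A j * F (insert j A) x * G (insert j (B0 - A)) x)"
      proof (rule sum.cong[OF refl])
        fix A assume A: "A \<in> Pow B0"
        have "B - A = insert j (B0 - A)" "j \<notin> A" using A B by auto
        then show "ssign A (B - A) * oder j F A x * G (B - A) x = ssign A (insert j (B0 - A)) * (-1)^cnt A j * F (insert j A) x * G (insert j (B0 - A)) x"
          by (simp add: oder_eq)
      qed
      finally show ?thesis .
    qed
    have R2: "smult F (oder j G) B x = (\<Sum>A\<in>Pow B0. ssign (insert j A) (B0 - A) * (-1)^cnt (B0 - A) j * F (insert j A) x * G (insert j (B0 - A)) x)"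
    proof -
      have "smult F (oder j G) B x = (\<Sum>A\<in>Pow B0. ssign A (B - A) * F A x * oder j G (B - A) x)
         + (\<Sum>A\<in>Pow B0. ssign (insert j A) (B - insert j A) * F (insert j A) x * oder j G (B - insert j A) x)"
        unfolding smult_def by (subst B(1), subst sum_Pow_insert[OF B(3,2)], simp add: B(1)[symmetric])
      also have "(\<Sum>A\<in>Pow B0. ssign A (B - A) * F A x * oder j G (B - A) x) = 0"
        using B by (intro sum.neutral) (auto simp: oder_eq)
      also have "(\<Sum>A\<in>Pow B0. ssign (insert j A) (B - insert j A) * F (insert j A) x * oder j G (B - insert j A) x)
          = (\<Sum>A\<in>Pow B0. ssign (insert j A) (B0 - A) * (-1)^cnt (B0 - A) j * F (insert j A) x * G (insert j (B0 - A)) x)"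
      proof (rule sum.cong[OF refl])
        fix A assume A: "A \<in> Pow B0"
        have "B - insert j A = B0 - A" "j \<notin> B0 - A" using A B by auto
        then show "ssign (insert j A) (B - insert j A) * F (insert j A) x * oder j G (B - insert j A) x = ssign (insert j A) (B0 - A) * (-1)^cnt (B0 - A) j * F (insert j A) x * G (insert j (B0 - A)) x"
          using B(2) by (simp add: oder_eq)
      qed
      finally show ?thesis by simp
    qed
    have "smult (oder j F) G B x + smult F (oder j G) B x = 
       (\<Sum>A\<in>Pow B0. (ssign A (insert j (B0 - A)) * (-1)^cnt A j + ssign (insert j A) (B0 - A) * (-1)^cnt (B0 - A) j) * F (insert j A) x * G (insert j (B0 - A)) x)"
      unfolding R1 R2 sum.distrib[symmetric] by (intro sum.cong) (auto simp: algebra_simps)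
    also have "\<dots> = 0"
    proof (rule sum.neutral, rule ballI)
      fix A assume A: "A \<in> Pow B0"
      show "(ssign A (insert j (B0 - A)) * (-1)^cnt A j + ssign (insert j A) (B0 - A) * (-1)^cnt (B0 - A) j) * F (insert j A) x * G (insert j (B0 - A)) x = 0"
      proof (cases "F (insert j A) x = 0")
        case False
        then have "even (card (insert j A))" "finite A" using sF ev unfolding supp_def by auto
        moreover have "j \<notin> A" using A B by auto
        ultimately have "odd (card A)" by simp
        then show ?thesis using sign3[OF B(3,2), of A] A by simp
      qed simp
    qed
    finally show ?thesis using True by (simp add: oder_eq)
  qed
qed

lemma smult_gen_gen: "a < b \<Longrightarrow> smult (gen a) (gen b) C x = (if C = {a,b} then 1 else 0)"
proof (cases "finite C")
  case True
  assume ab: "a < b"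
  have "smult (gen a) (gen b) C x = (\<Sum>A\<in>Pow C. if A = {a} then (if C - {a} = {b} then ssign {a} {b} else 0) else 0)"
    unfolding smult_def gen_def by (intro sum.cong) auto
  also have "\<dots> = (if {a} \<subseteq> C \<and> C - {a} = {b} then ssign {a} {b} else 0)"
    using True by (subst sum.delta) auto
  also have "ssign {a} {b} = 1"
  proof -
    have e: "{(aa,ba). aa = a \<and> ba = b \<and> ba < aa} = {}" using ab by auto
    show ?thesis by (simp add: ssign_def e)
  qed
  also have "({a} \<subseteq> C \<and> C - {a} = {b}) \<longleftrightarrow> C = {a,b}" using ab by auto
  finally show ?thesis by simp
qed (auto simp: smult_infinite)

lemma theta2_eq: "theta2 n C x = - (\<Sum>k\<in>{1..n}. if C = {2*k-1, 2*k} then 1 else 0)"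
  unfolding theta2_def by (intro arg_cong[where f=uminus] sum.cong refl) (simp add: smult_gen_gen)

lemma insert_pair_iff: "j \<notin> B \<Longrightarrow> c \<noteq> j \<Longrightarrow> (insert j B = {j,c}) = (B = {c})"
  by auto

lemma oder_theta2:
  assumes j: "j \<in> {1..2*n}"
  shows "oder j (theta2 n) B x = -2 * gup j B x"
proof (cases "j \<in> B")
  case True then show ?thesis using j by (auto simp: oder_eq gup_def gen_def)
next
  case jB: False
  show ?thesis
  proof (cases "odd j")
    case True
    define m where "m = (j+1) div 2"
    have m: "m \<in> {1..n}" "j = 2*m-1" using j True unfolding m_def by auto presburger+
    have "(\<Sum>k\<in>{1..n}. if insert j B = {2*k-1, 2*k} then 1 else 0) = (\<Sum>k\<in>{1..n}. if k = m then (if B = {j+1} then 1 else 0) else (0::real))"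
    proof (rule sum.cong[OF refl])
      fix k assume k: "k \<in> {1..n}"
      show "(if insert j B = {2*k-1, 2*k} then 1 else 0) = (if k = m then (if B = {j+1} then 1 else 0) else (0::real))"
      proof (cases "k = m")
        case True
        have e: "{2*k-1, 2*k} = {j, j+1}" using True m k by simp
        have "insert j B = {2*k-1, 2*k} \<longleftrightarrow> B = {j+1}" unfolding e by (rule insert_pair_iff[OF jB]) simp
        then show ?thesis using True by simp
      next
        case False
        have "j \<noteq> 2*k-1" "j \<noteq> 2*k" using False m k True by auto
        then have "insert j B \<noteq> {2*k-1, 2*k}" by auto
        then show ?thesis using False by simp
      qed
    qed
    also have "\<dots> = (if B = {j+1} then 1 else 0)" using m by (simp add: sum.delta)
    finally have s: "(\<Sum>k\<in>{1..n}. if insert j B = {2*k-1, 2*k} then 1 else 0) = (if B = {j+1} then 1 else (0::real))" .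
    have c: "cnt {Suc j} j = 0" by (simp add: cnt_def)
    show ?thesis using jB True unfolding oder_eq theta2_eq s by (auto simp: gup_def gen_def c)
  next
    case False
    define m where "m = j div 2"
    have m: "m \<in> {1..n}" "j = 2*m" using j False unfolding m_def by auto
    have "(\<Sum>k\<in>{1..n}. if insert j B = {2*k-1, 2*k} then 1 else 0) = (\<Sum>k\<in>{1..n}. if k = m then (if B = {j-1} then 1 else 0) else (0::real))"
    proof (rule sum.cong[OF refl])
      fix k assume k: "k \<in> {1..n}"
      show "(if insert j B = {2*k-1, 2*k} then 1 else 0) = (if k = m then (if B = {j-1} then 1 else 0) else (0::real))"
      proof (cases "k = m")
        case True
        have e: "{2*k-1, 2*k} = {j, j-1}" using True m k by (simp add: insert_commute)
        have "insert j B = {2*k-1, 2*k} \<longleftrightarrow> B = {j-1}" unfolding e by (rule insert_pair_iff[OF jB]) (use m in auto)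
        then show ?thesis using True by simp
      next
        case False
        have "j \<noteq> 2*k-1" "j \<noteq> 2*k" using False m k by auto
        then have "insert j B \<noteq> {2*k-1, 2*k}" by auto
        then show ?thesis using False by simp
      qed
    qed
    also have "\<dots> = (if B = {j-1} then 1 else 0)" using m by (simp add: sum.delta)
    finally have s: "(\<Sum>k\<in>{1..n}. if insert j B = {2*k-1, 2*k} then 1 else 0) = (if B = {j-1} then 1 else (0::real))" .
    have "{b\<in>{j-1}. b<j} = {j-1}" using m by auto
    then have c: "cnt {j - Suc 0} j = 1" by (simp add: cnt_def)
    show ?thesis using jB False unfolding oder_eq theta2_eq s by (auto simp: gup_def gen_def c)
  qed
qed

lemma supp_gup: "j \<in> {1..2*n} \<Longrightarrow> supp (gup j) 1 {1..2*n}"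
  unfolding supp_def gup_def gen_def by (auto; presburger)

lemma gup_spow_n: "j \<in> {1..2*n} \<Longrightarrow> smult (gup j) (spow (theta2 n) n) B x = 0"
  by (rule supp_zero[OF supp_smult[OF supp_gup supp_spow]]) auto

lemma oder_spow:
  assumes j: "j \<in> {1..2*n}"
  shows "oder j (spow (theta2 n) (Suc k)) B x = real (Suc k) * smult (oder j (theta2 n)) (spow (theta2 n) k) B x"
proof (induction k arbitrary: B)
  case 0
  have "oder j (spow (theta2 n) (Suc 0)) B x = smult (oder j (theta2 n)) sone B x + smult (theta2 n) (oder j sone) B x"
    unfolding spow_Suc spow_0 by (rule oder_smult[OF supp_theta2]) simp
  also have "smult (theta2 n) (oder j sone) B x = 0" by (rule smult_zero_r) (simp add: oder_eq sone_def)
  finally show ?case by (simp add: spow_0)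
next
  case (Suc k)
  let ?T = "theta2 n" and ?Q = "oder j (theta2 n)"
  have "oder j (spow ?T (Suc (Suc k))) B x = smult ?Q (spow ?T (Suc k)) B x + smult ?T (oder j (spow ?T (Suc k))) B x"
    unfolding spow_Suc[of _ "Suc k"] by (rule oder_smult[OF supp_theta2]) simp
  also have "smult ?T (oder j (spow ?T (Suc k))) B x = real (Suc k) * smult ?T (smult ?Q (spow ?T k)) B x"
    by (rule smult_scal_r) (rule Suc.IH)
  also have "smult ?T (smult ?Q (spow ?T k)) B x = smult (smult ?T ?Q) (spow ?T k) B x"
    by (rule smult_assoc[symmetric])
  also have "\<dots> = smult (smult ?Q ?T) (spow ?T k) B x"
    by (rule smult_cong_l) (rule smult_comm[OF supp_theta2], simp)
  also have "\<dots> = smult ?Q (spow ?T (Suc k)) B x" unfolding spow_Suc by (rule smult_assoc)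
  finally show ?case by (simp add: algebra_simps)
qed




lemma line_deriv:
  assumes "(g has_derivative g') (at (y + t0 *\<^sub>R v))"
  shows "((\<lambda>t. g (y + t *\<^sub>R v)) has_real_derivative g' v) (at t0)"
proof -
  have l: "((\<lambda>t. y + t *\<^sub>R v) has_derivative (\<lambda>t. t *\<^sub>R v)) (at t0)"
    by (auto intro!: derivative_eq_intros)
  have "((\<lambda>t. g (y + t *\<^sub>R v)) has_derivative (\<lambda>t. g' (t *\<^sub>R v))) (at t0)"
    by (rule has_derivative_compose[OF l assms])
  moreover have "\<And>t. g' (t *\<^sub>R v) = t * g' v"
    using has_derivative_bounded_linear[OF assms] by (metis bounded_linear.linear linear_scale real_scaleR_def)
  ultimately show ?thesis
    by (intro has_derivative_imp_has_field_derivative) (auto simp: mult.commute)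
qed

lemma pd_hd:
  assumes "(g has_derivative g') (at x)"
  shows "pd i g x = g' (axis i 1)"
  unfolding pd_def
  by (rule DERIV_imp_deriv, rule line_deriv) (use assms in simp)

lemma pd_fd:
  assumes "g differentiable (at x)"
  shows "pd i g x = frechet_derivative g (at x) (axis i 1)"
  using assms frechet_derivative_works pd_hd by blast

definition eqU :: "(real^'m \<Rightarrow> real) \<Rightarrow> (real^'m \<Rightarrow> real) \<Rightarrow> bool" where
  "eqU g h \<longleftrightarrow> (\<forall>y. y \<noteq> 0 \<longrightarrow> g y = h y)"

lemma open_U: "open (-{0::real^'m})" by auto

lemma pd_local:
  assumes "eqU g h" "x \<noteq> 0"
  shows "pd i g x = pd i h x"
  unfolding pd_def
proof (rule deriv_cong_ev[OF _ refl])
  show "\<forall>\<^sub>F t in nhds 0. g (x + t *\<^sub>R axis i 1) = h (x + t *\<^sub>R axis i 1)"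
    unfolding eventually_nhds_metric
  proof (intro exI conjI allI impI)
    show "norm x > 0" using assms(2) by simp
    fix t :: real assume "dist t 0 < norm x"
    then have "norm (t *\<^sub>R axis i (1::real)) < norm x" by simp
    then have "x + t *\<^sub>R axis i 1 \<noteq> 0"
      by (metis add.inverse_unique norm_minus_cancel order_less_irrefl)
    then show "g (x + t *\<^sub>R axis i 1) = h (x + t *\<^sub>R axis i 1)" using assms(1) by (simp add: eqU_def)
  qed
qed

lemma eqU_pd: "eqU g h \<Longrightarrow> eqU (pd i g) (pd i h)"
  using pd_local unfolding eqU_def by blast

lemma eqU_foldr: "eqU g h \<Longrightarrow> eqU (foldr pd js g) (foldr pd js h)"
  by (induction js) (auto intro: eqU_pd)

lemma eqU_refl[simp]: "eqU g g" by (simp add: eqU_def)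
lemma eqU_sym: "eqU g h \<Longrightarrow> eqU h g" by (simp add: eqU_def)
lemma eqU_trans: "eqU g h \<Longrightarrow> eqU h k \<Longrightarrow> eqU g k" by (simp add: eqU_def)

lemma diff_local:
  assumes "eqU g h" "x \<noteq> 0" "g differentiable (at x)"
  shows "h differentiable (at x)"
proof -
  obtain g' where "(g has_derivative g') (at x)" using assms(3) differentiable_def by blast
  then have "(h has_derivative g') (at x)"
    by (rule has_derivative_transform_within_open[OF _ open_U]) (use assms in \<open>auto simp: eqU_def\<close>)
  then show ?thesis using differentiable_def by blast
qed

definition Gm :: "nat \<Rightarrow> (real^'m \<Rightarrow> real) \<Rightarrow> bool" where
  "Gm m g \<longleftrightarrow> (\<forall>js. length js \<le> m \<longrightarrow> (\<forall>x. x \<noteq> 0 \<longrightarrow> foldr pd js g differentiable (at x)))"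

definition GG :: "(real^'m \<Rightarrow> real) \<Rightarrow> bool" where
  "GG g \<longleftrightarrow> (\<forall>m. Gm m g)"

lemma Gm_0: "Gm 0 g \<longleftrightarrow> (\<forall>x. x \<noteq> 0 \<longrightarrow> g differentiable (at x))"
  by (simp add: Gm_def)

lemma Gm_Suc: fixes g :: "real^'m::finite \<Rightarrow> real" shows "Gm (Suc m) g \<longleftrightarrow> (\<forall>x. x \<noteq> 0 \<longrightarrow> g differentiable (at x)) \<and> (\<forall>i. Gm m (pd i g))"
proof
  assume a: "Gm (Suc m) g"
  show "(\<forall>x. x \<noteq> 0 \<longrightarrow> g differentiable (at x)) \<and> (\<forall>i. Gm m (pd i g))"
  proof
    show "\<forall>x. x \<noteq> 0 \<longrightarrow> g differentiable (at x)"
    proof (intro allI impI)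
      fix x :: "real^'m" assume "x \<noteq> 0"
      then have "foldr pd [] g differentiable (at x)" using a unfolding Gm_def by (metis list.size(3) zero_le)
      then show "g differentiable (at x)" by simp
    qed
    show "\<forall>i. Gm m (pd i g)" unfolding Gm_def
    proof (intro allI impI)
      fix i and js :: "'m list" and x :: "real^'m" assume l: "length js \<le> m" and x: "x \<noteq> 0"
      have "length (js@[i]) \<le> Suc m" using l by simp
      with a x have "foldr pd (js@[i]) g differentiable (at x)" unfolding Gm_def by blast
      then show "foldr pd js (pd i g) differentiable (at x)" by simp
    qed
  qed
next
  assume a: "(\<forall>x. x \<noteq> 0 \<longrightarrow> g differentiable (at x)) \<and> (\<forall>i. Gm m (pd i g))"
  show "Gm (Suc m) g" unfolding Gm_def
  proof (intro allI impI)
    fix js :: "'m list" and x :: "real^'m" assume l: "length js \<le> Suc m" and x: "x \<noteq> 0"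
    show "foldr pd js g differentiable (at x)"
    proof (cases js rule: rev_exhaust)
      case Nil then show ?thesis using a x by simp
    next
      case (snoc ys i)
      then have "foldr pd js g = foldr pd ys (pd i g)" by simp
      moreover have "length ys \<le> m" using l snoc by simp
      ultimately show ?thesis using a x unfolding Gm_def by metis
    qed
  qed
qed

lemma Gm_cong: "Gm m g \<Longrightarrow> eqU g h \<Longrightarrow> Gm m h"
  unfolding Gm_def by (meson diff_local eqU_foldr)

lemma GG_cong: "GG g \<Longrightarrow> eqU g h \<Longrightarrow> GG h"
  unfolding GG_def using Gm_cong by blast

lemma GG_pd: "GG g \<Longrightarrow> GG (pd i g)"
  unfolding GG_def using Gm_Suc by blast

lemma GG_diff: "GG g \<Longrightarrow> x \<noteq> 0 \<Longrightarrow> g differentiable (at x)"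
  unfolding GG_def using Gm_0 by blast

lemma pd_const: "pd i (\<lambda>y. c) = (\<lambda>y. 0)"
  unfolding pd_def by simp

lemma Gm_const: "Gm m (\<lambda>y. c)"
  by (induction m arbitrary: c) (auto simp: Gm_0 Gm_Suc pd_const)

lemma pd_lin:
  assumes "\<And>a. a \<in> S \<Longrightarrow> g a differentiable (at x)"
  shows "pd i (\<lambda>y. \<Sum>a\<in>S. c a * g a y) x = (\<Sum>a\<in>S. c a * pd i (g a) x)"
proof (cases "finite S")
  case True
  have "((\<lambda>y. \<Sum>a\<in>S. c a * g a y) has_derivative (\<lambda>h. \<Sum>a\<in>S. c a * frechet_derivative (g a) (at x) h)) (at x)"
    using assms by (intro derivative_intros) (simp add: frechet_derivative_works[symmetric])
  then show ?thesis using assms by (simp add: pd_hd pd_fd)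
qed (simp add: pd_const)

lemma diff_lin:
  fixes g :: "'b \<Rightarrow> real^'m::finite \<Rightarrow> real"
  assumes "\<And>a. a \<in> S \<Longrightarrow> g a differentiable (at x)"
  shows "(\<lambda>y. \<Sum>a\<in>S. c a * g a y) differentiable (at x)"
proof (cases "finite S")
  case True
  have "((\<lambda>y. \<Sum>a\<in>S. c a * g a y) has_derivative (\<lambda>h. \<Sum>a\<in>S. c a * frechet_derivative (g a) (at x) h)) (at x)"
    using assms True by (intro has_derivative_sum has_derivative_mult_right) (simp add: frechet_derivative_works[symmetric])
  then show ?thesis unfolding differentiable_def by blast
qed simp

lemma pd_mult:
  assumes "g differentiable (at x)" "h differentiable (at x)"
  shows "pd i (\<lambda>y. g y * h y) x = pd i g x * h x + g x * pd i h x"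
proof -
  have "((\<lambda>y. g y * h y) has_derivative (\<lambda>v. g x * frechet_derivative h (at x) v + frechet_derivative g (at x) v * h x)) (at x)"
    using assms by (intro derivative_intros) (simp_all add: frechet_derivative_works[symmetric])
  then show ?thesis using assms by (simp add: pd_hd pd_fd algebra_simps)
qed

lemma Gm_lin: fixes g :: "'b \<Rightarrow> real^'m::finite \<Rightarrow> real" shows "(\<And>a. a \<in> S \<Longrightarrow> Gm m (g a)) \<Longrightarrow> Gm m (\<lambda>y. \<Sum>a\<in>S. c a * g a y)"
proof (induction m arbitrary: g)
  case 0 then show ?case by (auto simp: Gm_0 intro!: diff_lin)
next
  case (Suc m)
  show ?case unfolding Gm_Suc
  proof (intro conjI allI impI)
    fix x :: "real^'m" assume "x \<noteq> 0"
    then show "(\<lambda>y. \<Sum>a\<in>S. c a * g a y) differentiable (at x)" using Suc.prems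
      by (intro diff_lin) (auto simp: Gm_Suc)
  next
    fix i
    have "Gm m (\<lambda>y. \<Sum>a\<in>S. c a * pd i (g a) y)" using Suc by (intro Suc.IH) (auto simp: Gm_Suc)
    moreover have "eqU (\<lambda>y. \<Sum>a\<in>S. c a * pd i (g a) y) (pd i (\<lambda>y. \<Sum>a\<in>S. c a * g a y))"
      unfolding eqU_def using Suc.prems by (auto simp: Gm_Suc pd_lin)
    ultimately show "Gm m (pd i (\<lambda>y. \<Sum>a\<in>S. c a * g a y))" by (rule Gm_cong)
  qed
qed

lemma Gm_mono: "Gm (Suc m) g \<Longrightarrow> Gm m g"
  unfolding Gm_def by auto

lemma Gm_add: "Gm m g \<Longrightarrow> Gm m h \<Longrightarrow> Gm m (\<lambda>y. g y + h y)"
  using Gm_lin[of "{True,False}" m "\<lambda>b. if b then g else h" "\<lambda>_. 1"] by simp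

lemma Gm_mult: fixes g :: "real^'m::finite \<Rightarrow> real" shows "Gm m g \<Longrightarrow> Gm m h \<Longrightarrow> Gm m (\<lambda>y. g y * h y)"
proof (induction m arbitrary: g h)
  case 0 then show ?case by (auto simp: Gm_0 intro!: differentiable_mult)
next
  case (Suc m)
  show ?case unfolding Gm_Suc
  proof (intro conjI allI impI)
    fix x :: "real^'m" assume "x \<noteq> 0"
    then show "(\<lambda>y. g y * h y) differentiable (at x)" using Suc.prems
      by (auto simp: Gm_Suc intro!: differentiable_mult)
  next
    fix i
    have "Gm m (\<lambda>y. pd i g y * h y + g y * pd i h y)"
      using Suc by (intro Gm_add Suc.IH) (auto simp: Gm_Suc intro: Gm_mono)
    moreover have "eqU (\<lambda>y. pd i g y * h y + g y * pd i h y) (pd i (\<lambda>y. g y * h y))"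
      unfolding eqU_def using Suc.prems by (auto simp: Gm_Suc pd_mult)
    ultimately show "Gm m (pd i (\<lambda>y. g y * h y))" by (rule Gm_cong)
  qed
qed

lemma Gm_scal: "Gm m g \<Longrightarrow> Gm m (\<lambda>y. c * g y)"
  using Gm_mult[OF Gm_const] by blast

lemma Gm_pow: "Gm m g \<Longrightarrow> Gm m (\<lambda>y. g y ^ k)"
  by (induction k) (auto intro: Gm_mult Gm_const)

lemma hd_coord: "((\<lambda>y::real^'m::finite. y$j) has_derivative (\<lambda>h. h$j)) (at x)"
  using bounded_linear.has_derivative[OF bounded_linear_vec_nth has_derivative_ident] .

lemma pd_coord: "pd i (\<lambda>y. y$j) x = (if i = j then 1 else 0)"
  by (simp add: pd_hd[OF hd_coord] axis_def)

lemma Gm_coord: "Gm m (\<lambda>y. y$j)"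
proof (cases m)
  case 0 then show ?thesis using hd_coord by (auto simp: Gm_0 differentiable_def)
next
  case (Suc k)
  have "pd i (\<lambda>y. y$j) = (\<lambda>y. if i = j then 1 else 0)" for i by (rule ext) (rule pd_coord)
  then show ?thesis using hd_coord Suc by (auto simp: Gm_Suc differentiable_def Gm_const)
qed

definition nu :: "real^'m::finite \<Rightarrow> real" where "nu y = 1 / norm y"

lemma hd_nu: "x \<noteq> 0 \<Longrightarrow> (nu has_derivative (\<lambda>h. - (inverse (norm x) * inner h (sgn x) * inverse (norm x)))) (at x)"
proof -
  assume x: "x \<noteq> 0"
  have "((\<lambda>y. inverse (norm y)) has_derivative (\<lambda>h. - (inverse (norm x) * inner h (sgn x) * inverse (norm x)))) (at x)"
    using Deriv.has_derivative_inverse[OF _ has_derivative_norm[OF x]] x by simp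
  moreover have e: "(\<lambda>y. inverse (norm y)) = nu" by (rule ext) (simp add: nu_def divide_inverse)
  ultimately show ?thesis by (simp only: e)
qed

lemma pd_nu: "x \<noteq> 0 \<Longrightarrow> pd i nu x = - (x$i) * nu x ^ 3"
  using pd_hd[OF hd_nu] by (simp add: inner_axis' sgn_div_norm nu_def power3_eq_cube divide_inverse algebra_simps)

lemma Gm_nu: "Gm m (nu :: real^'m::finite \<Rightarrow> real)"
proof (induction m)
  case 0 then show ?case using hd_nu by (auto simp: Gm_0 differentiable_def)
next
  case (Suc m)
  have "Gm m (\<lambda>y. (-1) * (y$i * nu y ^ 3))" for i :: 'm
    by (intro Gm_scal Gm_mult Gm_pow Gm_coord Suc)
  moreover have "eqU (\<lambda>y. (-1) * (y$i * nu y ^ 3)) (pd i nu)" for i :: 'm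
    by (simp add: eqU_def pd_nu)
  ultimately show ?case using hd_nu by (auto simp: Gm_Suc differentiable_def intro: Gm_cong)
qed

lemma GG_const: "GG (\<lambda>y. c)" by (simp add: GG_def Gm_const)
lemma GG_coord: "GG (\<lambda>y. y$j)" by (simp add: GG_def Gm_coord)
lemma GG_nu: "GG nu" by (simp add: GG_def Gm_nu)
lemma GG_mult: "GG g \<Longrightarrow> GG h \<Longrightarrow> GG (\<lambda>y. g y * h y)" by (simp add: GG_def Gm_mult)
lemma GG_add: "GG g \<Longrightarrow> GG h \<Longrightarrow> GG (\<lambda>y. g y + h y)" by (simp add: GG_def Gm_add)
lemma GG_scal: "GG g \<Longrightarrow> GG (\<lambda>y. c * g y)" by (simp add: GG_def Gm_scal)
lemma GG_pow: "GG g \<Longrightarrow> GG (\<lambda>y. g y ^ k)" by (simp add: GG_def Gm_pow)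
lemma GG_lin: "(\<And>a. a \<in> S \<Longrightarrow> GG (g a)) \<Longrightarrow> GG (\<lambda>y. \<Sum>a\<in>S. c a * g a y)"
  by (simp add: GG_def Gm_lin)
lemma GG_diff2: "GG g \<Longrightarrow> GG h \<Longrightarrow> GG (\<lambda>y. g y - h y)"
  using GG_add[of g "\<lambda>y. (-1) * h y"] GG_scal by fastforce

lemma GG_smooth: "smooth_fun g \<Longrightarrow> GG g"
  unfolding smooth_fun_def GG_def Gm_def by (auto simp: differentiable_on_def)

lemma norm_sq: "norm (x::real^'m::finite) ^ 2 = (\<Sum>i\<in>UNIV. x$i * x$i)"
  by (simp add: power2_norm_eq_inner inner_vec_def)

lemma norm_nu: "x \<noteq> 0 \<Longrightarrow> norm x * nu x = 1" by (simp add: nu_def)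

lemma norm_eq_nu: "norm (y::real^'m::finite) = (\<Sum>i\<in>UNIV. 1 * (y$i * y$i)) * nu y"
proof (cases "y = 0")
  case False then show ?thesis using norm_sq[of y] by (simp add: nu_def power2_eq_square field_simps)
qed (simp add: nu_def)

lemma GG_norm: "GG (\<lambda>y::real^'m::finite. norm y)"
proof -
  have "GG (\<lambda>y::real^'m. (\<Sum>i\<in>UNIV. 1 * (y$i * y$i)) * nu y)"
    by (intro GG_mult GG_lin GG_coord GG_nu)
  then show ?thesis by (subst norm_eq_nu) simp
qed




definition D1 :: "(real^'m::finite \<Rightarrow> real) \<Rightarrow> real^'m \<Rightarrow> real" where
  "D1 g = (\<lambda>x. 1 / (2 * norm x) * (\<Sum>i\<in>UNIV. x$i / norm x * pd i g x))"

definition R1 :: "(real^'m::finite \<Rightarrow> real) \<Rightarrow> real^'m \<Rightarrow> real" where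
  "R1 g = (\<lambda>x. \<Sum>i\<in>UNIV. x$i / norm x * pd i g x)"

lemma dr_eq: "dr f A = R1 (f A)" by (rule ext) (simp add: dr_def R1_def)
lemma dr2_eq: "dr2 f A = D1 (f A)" by (rule ext) (simp add: dr2_def dr_def D1_def)
lemma dr2_pow: "(dr2 ^^ k) f A = (D1 ^^ k) (f A)"
  by (induction k arbitrary: A) (simp_all add: dr2_eq)
lemma epd_eq: "epd j f A = pd j (f A)" by (simp add: epd_def)

lemma R1_D1: "x \<noteq> 0 \<Longrightarrow> R1 g x = 2 * norm x * D1 g x"
  by (simp add: R1_def D1_def)

lemma D1_alt: "D1 g = (\<lambda>x. (1/2) * nu x ^ 2 * (\<Sum>i\<in>UNIV. 1 * (x$i * pd i g x)))"
proof (rule ext)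
  fix x :: "real^'a"
  show "D1 g x = (1/2) * nu x ^ 2 * (\<Sum>i\<in>UNIV. 1 * (x$i * pd i g x))"
  proof (cases "x = 0")
    case False
    then show ?thesis by (simp add: D1_def nu_def sum_distrib_left power2_eq_square field_simps)
  qed (simp add: D1_def nu_def)
qed

lemma GG_D1: "GG g \<Longrightarrow> GG (D1 g)"
  unfolding D1_alt by (intro GG_mult GG_scal GG_pow GG_nu GG_lin GG_coord GG_pd GG_const)

lemma D1_lin:
  assumes "x \<noteq> 0" "\<And>a. a \<in> S \<Longrightarrow> GG (g a)"
  shows "D1 (\<lambda>y. \<Sum>a\<in>S. c a * g a y) x = (\<Sum>a\<in>S. c a * D1 (g a) x)"
proof -
  have "pd i (\<lambda>y. \<Sum>a\<in>S. c a * g a y) x = (\<Sum>a\<in>S. c a * pd i (g a) x)" for i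
    using assms by (intro pd_lin) (auto intro: GG_diff)
  then show ?thesis unfolding D1_def
    by (simp add: sum_distrib_left sum.swap[of _ S] algebra_simps)
qed

lemma D1_mult:
  assumes "x \<noteq> 0" "GG u" "GG v"
  shows "D1 (\<lambda>y. u y * v y) x = D1 u x * v x + u x * D1 v x"
proof -
  have "pd i (\<lambda>y. u y * v y) x = pd i u x * v x + u x * pd i v x" for i
    using assms by (intro pd_mult) (auto intro: GG_diff)
  then show ?thesis unfolding D1_def
    by (simp add: sum_distrib_left sum_distrib_right sum.distrib algebra_simps)
qed

lemma D1_cong: "eqU g h \<Longrightarrow> eqU (D1 g) (D1 h)"
  unfolding eqU_def D1_def using pd_local[of g h] by (simp add: eqU_def)

lemma D1_const: "D1 (\<lambda>y. c) = (\<lambda>y. 0)"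
  by (simp add: D1_def pd_const)

lemma D1_coord: "x \<noteq> 0 \<Longrightarrow> D1 (\<lambda>y. y$j) x = (1/2) * nu x ^ 2 * x$j"
proof -
  have "(\<Sum>i\<in>UNIV. 1 * (x $ i * pd i (\<lambda>y. y$j) x)) = (\<Sum>i\<in>UNIV. if i = j then x$j else 0)"
    by (rule sum.cong) (auto simp: pd_coord)
  then show ?thesis unfolding D1_alt by simp
qed

lemma D1_nu: "x \<noteq> 0 \<Longrightarrow> D1 nu x = - (1/2) * nu x ^ 2 * nu x"
proof -
  assume x: "x \<noteq> 0"
  have "D1 nu x = (1/2) * nu x ^ 2 * (\<Sum>i\<in>UNIV. - (x$i * x$i) * nu x ^ 3)"
    unfolding D1_alt using x by (simp add: pd_nu algebra_simps)
  also have "(\<Sum>i\<in>UNIV. - (x$i * x$i) * nu x ^ 3) = - (nu x ^ 3) * (\<Sum>i\<in>UNIV. x$i * x$i)"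
    by (simp add: sum_distrib_left sum_negf algebra_simps)
  also have "(\<Sum>i\<in>UNIV. x$i * x$i) = norm x ^ 2" by (simp add: norm_sq)
  also have "(1/2) * nu x ^ 2 * (- (nu x ^ 3) * norm x ^ 2) = - (1/2) * nu x ^ 2 * (norm x ^ 2 * nu x ^ 2) * nu x"
    by (simp add: algebra_simps power2_eq_square power3_eq_cube)
  also have "norm x ^ 2 * nu x ^ 2 = 1" using norm_nu[OF x] by (simp add: power_mult_distrib[symmetric])
  finally show ?thesis by simp
qed

lemma GG_D1k: "GG g \<Longrightarrow> GG ((D1 ^^ k) g)"
  by (induction k) (auto intro: GG_D1)

lemma D1k_cong: "eqU g h \<Longrightarrow> eqU ((D1 ^^ k) g) ((D1 ^^ k) h)"
  by (induction k) (auto intro: D1_cong)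

lemma D1k_lin:
  assumes "\<And>a. a \<in> S \<Longrightarrow> GG (g a)"
  shows "eqU ((D1 ^^ k) (\<lambda>y. \<Sum>a\<in>S. c a * g a y)) (\<lambda>y. \<Sum>a\<in>S. c a * (D1 ^^ k) (g a) y)"
proof (induction k)
  case 0 then show ?case by simp
next
  case (Suc k)
  have "eqU (D1 ((D1 ^^ k) (\<lambda>y. \<Sum>a\<in>S. c a * g a y))) (D1 (\<lambda>y. \<Sum>a\<in>S. c a * (D1 ^^ k) (g a) y))"
    by (rule D1_cong[OF Suc.IH])
  moreover have "eqU (D1 (\<lambda>y. \<Sum>a\<in>S. c a * (D1 ^^ k) (g a) y)) (\<lambda>y. \<Sum>a\<in>S. c a * (D1 ^^ Suc k) (g a) y)"
    unfolding eqU_def using assms by (auto intro!: D1_lin GG_D1k)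
  ultimately show ?case by (auto intro: eqU_trans)
qed

lemma D1k_zero: "(D1 ^^ k) (\<lambda>y. 0) = (\<lambda>y. 0)"
  by (induction k) (simp_all add: D1_const)

definition xind :: "'m sfun \<Rightarrow> bool" where
  "xind K \<longleftrightarrow> (\<forall>C x y. K C x = K C y)"

lemma smult_xind: assumes a: "xind K" shows "smult K g C = (\<lambda>y. \<Sum>A\<in>Pow C. (ssign A (C-A) * K A 0) * g (C-A) y)"
proof -
  have k: "K A y = K A 0" for A y using a unfolding xind_def by blast
  show ?thesis unfolding smult_def
  proof (intro ext sum.cong refl)
    fix y A show "ssign A (C - A) * K A y * g (C - A) y = ssign A (C - A) * K A 0 * g (C - A) y"
      using k[of A y] by simp
  qed
qed

lemma GG_smult: "xind K \<Longrightarrow> (\<And>C. GG (g C)) \<Longrightarrow> GG (smult K g C)"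
  by (subst smult_xind) (auto intro: GG_lin)

lemma pd_smult:
  assumes "xind K" "\<And>C. g C differentiable (at x)"
  shows "pd i (smult K g C) x = smult K (\<lambda>C y. pd i (g C) y) C x"
  using assms by (simp add: smult_xind pd_lin)

lemma D1k_smult:
  assumes "xind K" "\<And>C. GG (g C)"
  shows "eqU ((D1 ^^ k) (smult K g C)) (smult K (\<lambda>C. (D1 ^^ k) (g C)) C)"
  using D1k_lin[of "Pow C" "\<lambda>A. g (C - A)" k "\<lambda>A. ssign A (C-A) * K A 0"] assms
  by (simp add: smult_xind)

lemma xind_sone: "xind sone" by (simp add: xind_def sone_def)
lemma xind_gen: "xind (gen j)" by (simp add: xind_def gen_def)
lemma xind_gup: "xind (gup j)" by (simp add: xind_def gup_def gen_def)
lemma xind_smult: assumes "xind F" "xind G" shows "xind (smult F G)"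
  unfolding xind_def
proof (intro allI)
  fix C x y
  have f: "F A x = F A y" "G A x = G A y" for A using assms unfolding xind_def by blast+
  show "smult F G C x = smult F G C y" unfolding smult_def by (intro sum.cong refl) (simp add: f)
qed
lemma xind_theta2: "xind (theta2 n)" by (simp add: xind_def theta2_eq)
lemma xind_spow: "xind (spow (theta2 n) k)"
  by (induction k) (auto simp: spow_0 spow_Suc xind_sone xind_smult xind_theta2)




definition sG :: "'m::finite sfun \<Rightarrow> bool" where "sG F \<longleftrightarrow> (\<forall>C. GG (F C))"

abbreviation ck :: "nat \<Rightarrow> real" where "ck k \<equiv> (-1)^k / fact k"

lemma dr2_pow_fun: "(dr2 ^^ k) F = (\<lambda>C. (D1 ^^ k) (F C))"
  by (rule ext) (rule dr2_pow)

lemma phi_eq: "phi n F B = (\<lambda>y. \<Sum>k\<in>{0..n}. ck k * smult (spow (theta2 n) k) (\<lambda>C. (D1 ^^ k) (F C)) B y)"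
  by (rule ext) (simp add: phi_def dr2_pow_fun)

lemma phi_cong:
  assumes "\<And>C. eqU (F C) (F' C)" "x \<noteq> 0"
  shows "phi n F B x = phi n F' B x"
proof -
  have "(D1 ^^ k) (F C) x = (D1 ^^ k) (F' C) x" for k C
    using D1k_cong[OF assms(1)] assms(2) unfolding eqU_def by blast
  then show ?thesis unfolding phi_eq by (intro sum.cong refl arg_cong2[where f="(*)"] smult_cong_r) auto
qed

lemma GG_phi: "sG F \<Longrightarrow> GG (phi n F B)"
  unfolding phi_eq sG_def by (intro GG_lin GG_smult xind_spow GG_D1k) auto

lemma pd_phi:
  assumes "sG F" "x \<noteq> 0"
  shows "pd i (phi n F B) x = (\<Sum>k\<in>{0..n}. ck k * smult (spow (theta2 n) k) (\<lambda>C. pd i ((D1 ^^ k) (F C))) B x)"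
proof -
  have g: "GG (smult (spow (theta2 n) k) (\<lambda>C. (D1 ^^ k) (F C)) B)" for k
    using assms unfolding sG_def by (intro GG_smult xind_spow GG_D1k) auto
  have "pd i (phi n F B) x = (\<Sum>k\<in>{0..n}. ck k * pd i (smult (spow (theta2 n) k) (\<lambda>C. (D1 ^^ k) (F C)) B) x)"
    unfolding phi_eq using g assms by (intro pd_lin) (auto intro: GG_diff)
  also have "\<dots> = (\<Sum>k\<in>{0..n}. ck k * smult (spow (theta2 n) k) (\<lambda>C. pd i ((D1 ^^ k) (F C))) B x)"
    using assms unfolding sG_def by (intro sum.cong refl arg_cong2[where f="(*)"] pd_smult xind_spow GG_diff GG_D1k) auto
  finally show ?thesis .
qed

lemma D1_smult:
  assumes "xind K" "\<And>C. GG (g C)" "x \<noteq> 0"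
  shows "D1 (smult K g B) x = smult K (\<lambda>C. D1 (g C)) B x"
  using D1k_smult[OF assms(1,2), where k=1 and C=B] assms(3) by (simp add: eqU_def)

lemma D1_phi:
  assumes "sG F" "x \<noteq> 0"
  shows "D1 (phi n F B) x = phi n (\<lambda>C. D1 (F C)) B x"
proof -
  have g: "GG (smult (spow (theta2 n) k) (\<lambda>C. (D1 ^^ k) (F C)) B)" for k
    using assms unfolding sG_def by (intro GG_smult xind_spow GG_D1k) auto
  have "D1 (phi n F B) x = (\<Sum>k\<in>{0..n}. ck k * D1 (smult (spow (theta2 n) k) (\<lambda>C. (D1 ^^ k) (F C)) B) x)"
    unfolding phi_eq using g assms by (intro D1_lin) auto
  also have "\<dots> = (\<Sum>k\<in>{0..n}. ck k * smult (spow (theta2 n) k) (\<lambda>C. D1 ((D1 ^^ k) (F C))) B x)"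
    using assms unfolding sG_def by (intro sum.cong refl arg_cong2[where f="(*)"] D1_smult xind_spow GG_D1k) auto
  also have "\<dots> = phi n (\<lambda>C. D1 (F C)) B x"
    unfolding phi_eq by (simp add: funpow_swap1)
  finally show ?thesis .
qed

lemma phi_lin:
  assumes "\<And>a. a \<in> S \<Longrightarrow> sG (F a)" "x \<noteq> 0"
  shows "phi n (\<lambda>C y. \<Sum>a\<in>S. c a * F a C y) B x = (\<Sum>a\<in>S. c a * phi n (F a) B x)"
proof -
  have e: "(D1 ^^ k) (\<lambda>y. \<Sum>a\<in>S. c a * F a C y) x = (\<Sum>a\<in>S. c a * (D1 ^^ k) (F a C) x)" for k C
    using D1k_lin[of S "\<lambda>a. F a C" k c] assms unfolding sG_def eqU_def by blast
  have "phi n (\<lambda>C y. \<Sum>a\<in>S. c a * F a C y) B x = (\<Sum>k\<in>{0..n}. ck k * (\<Sum>a\<in>S. c a * smult (spow (theta2 n) k) (\<lambda>C. (D1 ^^ k) (F a C)) B x))"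
    unfolding phi_eq by (intro sum.cong refl arg_cong2[where f="(*)"] smult_sum_r) (simp add: e)
  also have "\<dots> = (\<Sum>a\<in>S. c a * phi n (F a) B x)"
    unfolding phi_eq by (simp add: sum_distrib_left sum.swap[of _ "{0..n}"] algebra_simps)
  finally show ?thesis .
qed

lemma D1k_scal: "GG g \<Longrightarrow> eqU ((D1 ^^ k) (\<lambda>y. c * g y)) (\<lambda>y. c * (D1 ^^ k) g y)"
  using D1k_lin[of "{()}" "\<lambda>_. g" k "\<lambda>_. c"] by simp

definition ffact :: "real \<Rightarrow> nat \<Rightarrow> real" where "ffact al a = (\<Prod>i=0..<a. al - of_nat i)"

lemma ffact_Suc: "ffact al (Suc a) = ffact al a * (al - of_nat a)"
  by (simp add: ffact_def)
lemma ffact_0: "ffact al 0 = 1" by (simp add: ffact_def)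
lemma ffact_gchoose: "ffact al a = fact a * (al gchoose a)"
  by (simp add: ffact_def gbinomial_prod_rev)

lemma D1_nupow: "x \<noteq> 0 \<Longrightarrow> D1 (\<lambda>y. nu y ^ p) x = - (of_nat p / 2) * nu x ^ (p+2)"
proof (induction p)
  case 0 then show ?case by (simp add: D1_const)
next
  case (Suc p)
  have "D1 (\<lambda>y. nu y ^ Suc p) x = D1 (\<lambda>y. nu y * nu y ^ p) x" by simp
  also have "\<dots> = D1 nu x * nu x ^ p + nu x * D1 (\<lambda>y. nu y ^ p) x"
    using Suc.prems by (intro D1_mult GG_nu GG_pow)
  also have "\<dots> = - (of_nat (Suc p) / 2) * nu x ^ (Suc p + 2)"
    using Suc by (simp add: D1_nu algebra_simps power2_eq_square power3_eq_cube power_add)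
  finally show ?case .
qed

lemma D1_cmult: "x \<noteq> 0 \<Longrightarrow> GG g \<Longrightarrow> D1 (\<lambda>y. c * g y) x = c * D1 g x"
  using D1_mult[of x "\<lambda>y. c" g] by (simp add: GG_const D1_const)

definition Pu :: "real \<Rightarrow> (real^'m::finite \<Rightarrow> real) \<Rightarrow> nat \<Rightarrow> real^'m \<Rightarrow> real" where
  "Pu al u a = (\<lambda>y. ffact al a * nu y ^ (2*a) * u y)"

lemma GG_Pu: "GG u \<Longrightarrow> GG (Pu al u a)"
  unfolding Pu_def by (intro GG_mult GG_scal GG_pow GG_nu)

lemma D1_Pu:
  assumes u: "GG u" "eqU (D1 u) (\<lambda>y. al * nu y ^ 2 * u y)" and x: "x \<noteq> 0"
  shows "D1 (Pu al u a) x = Pu al u (Suc a) x"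
proof -
  have "D1 (Pu al u a) x = D1 (\<lambda>y. ffact al a * nu y ^ (2*a)) x * u x + ffact al a * nu x ^ (2*a) * D1 u x"
    unfolding Pu_def using u x by (intro D1_mult GG_scal GG_pow GG_nu)
  also have "D1 (\<lambda>y. ffact al a * nu y ^ (2*a)) x = ffact al a * (- (of_nat (2*a) / 2) * nu x ^ (2*a+2))"
    using x by (simp add: D1_cmult GG_pow GG_nu D1_nupow)
  also have "D1 u x = al * nu x ^ 2 * u x" using u(2) x by (simp add: eqU_def)
  finally show ?thesis unfolding Pu_def
    by (simp add: ffact_Suc algebra_simps power_add power2_eq_square)
qed

lemma pascal_sum:
  fixes p q :: "nat \<Rightarrow> real"
  shows "(\<Sum>a\<le>k. of_nat (k choose a) * (p (Suc a) * q (k - a) + p a * q (Suc k - a)))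
       = (\<Sum>a\<le>Suc k. of_nat (Suc k choose a) * (p a * q (Suc k - a)))"
proof -
  have r: "(\<Sum>a\<le>Suc k. of_nat (Suc k choose a) * (p a * q (Suc k - a)))
      = p 0 * q (Suc k) + (\<Sum>a\<le>k. of_nat (Suc k choose Suc a) * (p (Suc a) * q (k - a)))"
    by (subst sum.atMost_Suc_shift) simp
  have s1: "(\<Sum>a\<le>k. of_nat (Suc k choose Suc a) * (p (Suc a) * q (k - a)))
      = (\<Sum>a\<le>k. of_nat (k choose a) * (p (Suc a) * q (k - a))) + (\<Sum>a\<le>k. of_nat (k choose Suc a) * (p (Suc a) * q (k - a)))"
    by (simp add: sum.distrib[symmetric] algebra_simps)
  have s2: "(\<Sum>a\<le>k. of_nat (k choose a) * (p a * q (Suc k - a)))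
      = p 0 * q (Suc k) + (\<Sum>a\<le>k. of_nat (k choose Suc a) * (p (Suc a) * q (k - a)))"
  proof -
    have "(\<Sum>a\<le>k. of_nat (k choose a) * (p a * q (Suc k - a))) = (\<Sum>a\<le>Suc k. of_nat (k choose a) * (p a * q (Suc k - a)))"
      by (simp add: sum.atMost_Suc)
    also have "\<dots> = p 0 * q (Suc k) + (\<Sum>a\<le>k. of_nat (k choose Suc a) * (p (Suc a) * q (k - a)))"
      by (subst sum.atMost_Suc_shift) simp
    finally show ?thesis .
  qed
  have t: "(\<Sum>a\<le>k. of_nat (k choose a) * (p (Suc a) * q (k - a) + p a * q (Suc k - a)))
     = (\<Sum>a\<le>k. of_nat (k choose a) * (p (Suc a) * q (k - a))) + (\<Sum>a\<le>k. of_nat (k choose a) * (p a * q (Suc k - a)))"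
    by (simp add: distrib_left sum.distrib)
  show ?thesis unfolding t s2 r s1 by linarith
qed

lemma leibniz:
  assumes u: "GG u" "eqU (D1 u) (\<lambda>y. al * nu y ^ 2 * u y)" and g: "GG g"
  shows "eqU ((D1 ^^ k) (\<lambda>y. u y * g y)) (\<lambda>y. \<Sum>a\<le>k. of_nat (k choose a) * (Pu al u a y * (D1 ^^ (k - a)) g y))"
proof (induction k)
  case 0 then show ?case by (simp add: eqU_def Pu_def ffact_0)
next
  case (Suc k)
  let ?h = "\<lambda>a y. Pu al u a y * (D1 ^^ (k - a)) g y"
  have hG: "GG (?h a)" for a using u g by (intro GG_mult GG_Pu GG_D1k)
  have "eqU (D1 ((D1 ^^ k) (\<lambda>y. u y * g y))) (D1 (\<lambda>y. \<Sum>a\<le>k. of_nat (k choose a) * ?h a y))"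
    by (rule D1_cong[OF Suc.IH])
  moreover have "eqU (D1 (\<lambda>y. \<Sum>a\<le>k. of_nat (k choose a) * ?h a y))
     (\<lambda>y. \<Sum>a\<le>Suc k. of_nat (Suc k choose a) * (Pu al u a y * (D1 ^^ (Suc k - a)) g y))"
    unfolding eqU_def
  proof (intro allI impI)
    fix y :: "real^'a" assume y: "y \<noteq> 0"
    have "D1 (\<lambda>y. \<Sum>a\<le>k. of_nat (k choose a) * ?h a y) y = (\<Sum>a\<le>k. of_nat (k choose a) * D1 (?h a) y)"
      using y hG by (intro D1_lin) auto
    also have "\<dots> = (\<Sum>a\<le>k. of_nat (k choose a) * (Pu al u (Suc a) y * (D1 ^^ (k - a)) g y + Pu al u a y * (D1 ^^ (Suc k - a)) g y))"
    proof (intro sum.cong refl arg_cong2[where f="(*)"])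
      fix a assume a: "a \<in> {..k}"
      have "D1 (?h a) y = D1 (Pu al u a) y * (D1 ^^ (k - a)) g y + Pu al u a y * D1 ((D1 ^^ (k - a)) g) y"
        using y u g by (intro D1_mult GG_Pu GG_D1k)
      moreover have "D1 ((D1 ^^ (k - a)) g) = (D1 ^^ (Suc k - a)) g" using a by (simp add: Suc_diff_le)
      ultimately show "D1 (?h a) y = Pu al u (Suc a) y * (D1 ^^ (k - a)) g y + Pu al u a y * (D1 ^^ (Suc k - a)) g y"
        using D1_Pu[OF u y] by simp
    qed
    also have "\<dots> = (\<Sum>a\<le>Suc k. of_nat (Suc k choose a) * (Pu al u a y * (D1 ^^ (Suc k - a)) g y))"
      by (rule pascal_sum[where p="\<lambda>a. Pu al u a y" and q="\<lambda>b. (D1 ^^ b) g y"])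
    finally show "D1 (\<lambda>y. \<Sum>a\<le>k. of_nat (k choose a) * ?h a y) y = (\<Sum>a\<le>Suc k. of_nat (Suc k choose a) * (Pu al u a y * (D1 ^^ (Suc k - a)) g y))" .
  qed
  ultimately show ?case by (auto intro: eqU_trans)
qed

definition Sfac :: "nat \<Rightarrow> real \<Rightarrow> 'm::finite sfun" where
  "Sfac n al A x = (\<Sum>k=0..n. (al gchoose k) * (-1)^k / (norm x)^(2*k) * spow (theta2 n) k A x)"

lemma sqrtfac_Sfac: "sqrtfac n = Sfac n (1/2)"
  by (intro ext) (simp add: sqrtfac_def Sfac_def)
lemma isqrtfac_Sfac: "isqrtfac n = Sfac n (-1/2)"
  by (intro ext) (simp add: isqrtfac_def Sfac_def)

lemma coef_id:
  assumes x: "x \<noteq> 0"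
  shows "ck (a+b) * of_nat ((a+b) choose a) * (ffact al a * nu x ^ (2*a) * ux)
       = ux * ((al gchoose a) * (-1)^a / (norm x)^(2*a)) * ck b"
proof -
  have bf: "of_nat ((a+b) choose a) = (fact (a+b) :: real) / (fact a * fact b)"
    using binomial_fact[of a "a+b", where 'a=real] by simp
  have nu: "nu x ^ (2*a) = 1 / (norm x)^(2*a)" by (simp add: nu_def power_one_over)
  show ?thesis unfolding bf nu ffact_gchoose
    by (simp add: power_add field_simps)
qed

lemma phi_mult:
  assumes u: "GG u" "eqU (D1 u) (\<lambda>y. al * nu y ^ 2 * u y)" and g: "sG g" and x: "x \<noteq> 0"
  shows "phi n (\<lambda>C y. u y * g C y) B x = u x * smult (Sfac n al) (phi n g) B x"
proof -
  define W where "W k b = smult (spow (theta2 n) k) (\<lambda>C. (D1 ^^ b) (g C)) B x" for k b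
  define F where "F a b = ck (a+b) * of_nat ((a+b) choose a) * Pu al u a x * W (a+b) b" for a b
  define coef where "coef a = (al gchoose a) * (-1)^a / (norm x)^(2*a)" for a
  have L1: "phi n (\<lambda>C y. u y * g C y) B x = (\<Sum>k\<in>{..n}. \<Sum>a\<in>{..k}. F a (k - a))"
    unfolding phi_eq atLeast0AtMost
  proof (intro sum.cong refl)
    fix k assume k: "k \<in> {..n}"
    have e: "(D1^^k) (\<lambda>y. u y * g C y) x = (\<Sum>a\<in>{..k}. (of_nat (k choose a) * Pu al u a x) * (D1^^(k-a)) (g C) x)" for C
      using leibniz[OF u, of "g C" k] g x by (simp add: eqU_def sG_def mult.assoc)
    have "smult (spow (theta2 n) k) (\<lambda>C. (D1^^k) (\<lambda>y. u y * g C y)) B x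
        = (\<Sum>a\<in>{..k}. (of_nat (k choose a) * Pu al u a x) * W k (k-a))"
      unfolding W_def by (rule smult_sum_r) (rule e)
    also have "ck k * \<dots> = (\<Sum>a\<in>{..k}. F a (k-a))"
      unfolding F_def sum_distrib_left by (intro sum.cong refl) (auto simp: algebra_simps)
    finally show "ck k * smult (spow (theta2 n) k) (\<lambda>C. (D1^^k) (\<lambda>y. u y * g C y)) B x = (\<Sum>a\<in>{..k}. F a (k-a))" .
  qed
  also have "\<dots> = (\<Sum>(a,b)\<in>{(a,b). a+b \<le> n}. F a b)"
    by (rule sum.triangle_reindex_eq[symmetric])
  finally have L: "phi n (\<lambda>C y. u y * g C y) B x = (\<Sum>(a,b)\<in>{(a,b). a+b \<le> n}. F a b)" .
  have R1: "smult (Sfac n al) (phi n g) B x = (\<Sum>a\<in>{0..n}. coef a * smult (spow (theta2 n) a) (phi n g) B x)"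
    by (rule smult_sum_l) (simp add: Sfac_def coef_def)
  have R2: "smult (spow (theta2 n) a) (phi n g) B x = (\<Sum>b\<in>{0..n}. ck b * W (a+b) b)" for a
  proof -
    have "smult (spow (theta2 n) a) (phi n g) B x = (\<Sum>b\<in>{0..n}. ck b * smult (spow (theta2 n) a) (smult (spow (theta2 n) b) (\<lambda>C. (D1 ^^ b) (g C))) B x)"
      by (rule smult_sum_r) (simp add: phi_eq)
    also have "\<dots> = (\<Sum>b\<in>{0..n}. ck b * W (a+b) b)"
    proof (intro sum.cong refl arg_cong2[where f="(*)"])
      fix b
      have "smult (spow (theta2 n) a) (smult (spow (theta2 n) b) (\<lambda>C. (D1 ^^ b) (g C))) B x
          = smult (smult (spow (theta2 n) a) (spow (theta2 n) b)) (\<lambda>C. (D1 ^^ b) (g C)) B x"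
        by (rule smult_assoc[symmetric])
      also have "\<dots> = W (a+b) b" unfolding W_def by (rule smult_cong_l) (rule spow_add)
      finally show "smult (spow (theta2 n) a) (smult (spow (theta2 n) b) (\<lambda>C. (D1 ^^ b) (g C))) B x = W (a+b) b" .
    qed
    finally show ?thesis .
  qed
  have Wz: "n < a+b \<Longrightarrow> W (a+b) b = 0" for a b
    unfolding W_def by (rule smult_zero_l) (simp add: spow_vanish)
  have "u x * smult (Sfac n al) (phi n g) B x = (\<Sum>(a,b)\<in>{..n}\<times>{..n}. u x * coef a * ck b * W (a+b) b)"
    unfolding R1 R2 atLeast0AtMost sum.cartesian_product[symmetric]
    by (simp add: sum_distrib_left mult.assoc)
  also have "\<dots> = (\<Sum>(a,b)\<in>{(a,b). a+b \<le> n}. u x * coef a * ck b * W (a+b) b)"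
  proof (rule sum.mono_neutral_right)
    show "\<forall>i\<in>{..n} \<times> {..n} - {(a, b). a + b \<le> n}. (case i of (a, b) \<Rightarrow> u x * coef a * ck b * W (a + b) b) = 0"
    proof (intro ballI)
      fix i assume i: "i \<in> {..n} \<times> {..n} - {(a, b). a + b \<le> n}"
      obtain a b where ab: "i = (a,b)" by (cases i)
      then have "W (a+b) b = 0" using i by (intro Wz) auto
      then show "(case i of (a, b) \<Rightarrow> u x * coef a * ck b * W (a + b) b) = 0" using ab by simp
    qed
  qed auto
  also have "\<dots> = (\<Sum>(a,b)\<in>{(a,b). a+b \<le> n}. F a b)"
  proof (intro sum.cong refl, clarify)
    fix a b
    show "u x * coef a * ck b * W (a+b) b = F a b"
      unfolding F_def Pu_def coef_def using coef_id[OF x, of a b al "u x"] by simp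
  qed
  finally show ?thesis using L by simp
qed




lemma superfun_sG: "superfun n f \<Longrightarrow> sG f"
  unfolding superfun_def sG_def by (metis GG_smooth GG_const)

lemma sG_D1k: "sG f \<Longrightarrow> sG (\<lambda>C. (D1 ^^ k) (f C))"
  unfolding sG_def by (auto intro: GG_D1k)

lemma claim1:
  assumes f: "sG f" and x: "x \<noteq> 0"
  shows "phi n (sxmul j f) A x = x$j * smult (sqrtfac n) (phi n f) A x"
proof -
  have e: "sxmul j f = (\<lambda>C y. (\<lambda>y. y$j) y * f C y)" by (intro ext) (simp add: sxmul_def)
  have d: "eqU (D1 (\<lambda>y. y$j)) (\<lambda>y. (1/2) * nu y ^ 2 * y$j)"
    by (simp add: eqU_def D1_coord)
  show ?thesis unfolding e sqrtfac_Sfac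
    using phi_mult[OF GG_coord d f x] by simp
qed

lemma claim2:
  assumes f: "sG f" and x: "x \<noteq> 0"
  shows "phi n (smult (gen j) f) A x = smult (gen j) (phi n f) A x"
proof -
  have "phi n (smult (gen j) f) A x = (\<Sum>k\<in>{0..n}. ck k * smult (gen j) (smult (spow (theta2 n) k) (\<lambda>C. (D1 ^^ k) (f C))) A x)"
    unfolding phi_eq
  proof (intro sum.cong refl arg_cong2[where f="(*)"])
    fix k
    have "smult (spow (theta2 n) k) (\<lambda>C. (D1 ^^ k) (smult (gen j) f C)) A x
        = smult (spow (theta2 n) k) (smult (gen j) (\<lambda>C. (D1 ^^ k) (f C))) A x"
      using D1k_smult[OF xind_gen, of f k] f x unfolding sG_def eqU_def
      by (intro smult_cong_r) auto
    also have "\<dots> = smult (smult (spow (theta2 n) k) (gen j)) (\<lambda>C. (D1 ^^ k) (f C)) A x"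
      by (rule smult_assoc[symmetric])
    also have "\<dots> = smult (smult (gen j) (spow (theta2 n) k)) (\<lambda>C. (D1 ^^ k) (f C)) A x"
      by (intro smult_cong_l smult_comm[OF supp_spow]) simp
    also have "\<dots> = smult (gen j) (smult (spow (theta2 n) k) (\<lambda>C. (D1 ^^ k) (f C))) A x"
      by (rule smult_assoc)
    finally show "smult (spow (theta2 n) k) (\<lambda>C. (D1 ^^ k) (smult (gen j) f C)) A x
        = smult (gen j) (smult (spow (theta2 n) k) (\<lambda>C. (D1 ^^ k) (f C))) A x" .
  qed
  also have "\<dots> = smult (gen j) (phi n f) A x"
    by (rule smult_sum_r[symmetric]) (simp add: phi_eq)
  finally show ?thesis .
qed

lemma Dk_oder:
  assumes f: "sG f" and x: "x \<noteq> 0"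
  shows "(D1 ^^ k) (oder j f C) x = oder j (\<lambda>C. (D1 ^^ k) (f C)) C x"
proof (cases "j \<in> C")
  case True
  then have "oder j f C = (\<lambda>y. 0)" by (intro ext) (simp add: oder_eq)
  then show ?thesis using True by (simp add: D1k_zero oder_eq)
next
  case False
  then have "oder j f C = (\<lambda>y. (-1)^cnt C j * f (insert j C) y)" by (intro ext) (simp add: oder_eq)
  then show ?thesis using False D1k_scal[of "f (insert j C)" k "(-1)^cnt C j"] f x
    by (simp add: oder_eq sG_def eqU_def)
qed

lemma oder_spow_gen:
  assumes j: "j \<in> {1..2*n}"
  shows "oder j (spow (theta2 n) k) C x = (if k = 0 then 0 else real k * (-2) * smult (gup j) (spow (theta2 n) (k - 1)) C x)"
proof (cases k)
  case 0 then show ?thesis by (simp add: spow_0 oder_eq sone_def)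
next
  case (Suc m)
  have "smult (oder j (theta2 n)) (spow (theta2 n) m) C x = (-2) * smult (gup j) (spow (theta2 n) m) C x"
    by (rule smult_scal_l) (rule oder_theta2[OF j])
  then show ?thesis using oder_spow[OF j, of m C x] Suc by (simp add: algebra_simps)
qed

lemma ck_Suc: "ck (Suc m) * real (Suc m) = - ck m"
proof -
  have "ck (Suc m) * real (Suc m) = (-1) * (-1)^m / (real (Suc m) * fact m) * real (Suc m)"
    by (simp only: fact_Suc power_Suc of_nat_mult)
  also have "\<dots> = - ck m" by (simp del: of_nat_Suc)
  finally show ?thesis .
qed

lemma claim4:
  assumes f: "sG f" and x: "x \<noteq> 0" and j: "j \<in> {1..2*n}"
  shows "phi n (oder j f) B x = oder j (phi n f) B x - 1 / norm x * smult (gup j) (dr (phi n f)) B x"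
proof -
  define H where "H k = (\<lambda>C. (D1 ^^ k) (f C))" for k
  define X where "X m = smult (smult (gup j) (spow (theta2 n) m)) (H (Suc m)) B x" for m
  have step: "smult (spow (theta2 n) k) (H' k) B x = oder j (smult (spow (theta2 n) k) (H k)) B x - smult (oder j (spow (theta2 n) k)) (H k) B x"
    if "\<And>C. H' k C x = oder j (H k) C x" for k H'
  proof -
    have "smult (spow (theta2 n) k) (H' k) B x = smult (spow (theta2 n) k) (oder j (H k)) B x"
      using that by (rule smult_cong_r)
    moreover have "oder j (smult (spow (theta2 n) k) (H k)) B x = smult (oder j (spow (theta2 n) k)) (H k) B x + smult (spow (theta2 n) k) (oder j (H k)) B x"
      by (rule oder_smult[OF supp_spow]) simp
    ultimately show ?thesis by simp
  qed
  have L: "phi n (oder j f) B x = (\<Sum>k\<in>{0..n}. ck k * oder j (smult (spow (theta2 n) k) (H k)) B x)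
        - (\<Sum>k\<in>{0..n}. ck k * smult (oder j (spow (theta2 n) k)) (H k) B x)"
    unfolding phi_eq sum_subtractf[symmetric] right_diff_distrib[symmetric]
    by (intro sum.cong refl arg_cong2[where f="(*)"] step) (simp add: H_def Dk_oder[OF f x])
  have O: "oder j (phi n f) B x = (\<Sum>k\<in>{0..n}. ck k * oder j (smult (spow (theta2 n) k) (H k)) B x)"
    unfolding phi_eq H_def by (cases "j \<in> B") (simp_all add: oder_eq sum_distrib_left algebra_simps)
  have D: "dr (phi n f) C x = 2 * norm x * (\<Sum>k\<in>{0..n}. ck k * smult (spow (theta2 n) k) (H (Suc k)) C x)" for C
  proof -
    have "dr (phi n f) C x = 2 * norm x * D1 (phi n f C) x" using x by (simp add: dr_eq R1_D1)
    also have "D1 (phi n f C) x = phi n (\<lambda>C. D1 (f C)) C x" using f x by (rule D1_phi)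
    also have "\<dots> = (\<Sum>k\<in>{0..n}. ck k * smult (spow (theta2 n) k) (H (Suc k)) C x)"
      unfolding phi_eq H_def by (simp add: funpow_swap1)
    finally show ?thesis .
  qed
  have R: "1 / norm x * smult (gup j) (dr (phi n f)) B x = 2 * (\<Sum>k\<in>{0..n}. ck k * X k)"
  proof -
    have "smult (gup j) (dr (phi n f)) B x = 2 * norm x * smult (gup j) (\<lambda>C y. \<Sum>k\<in>{0..n}. ck k * smult (spow (theta2 n) k) (H (Suc k)) C y) B x"
      by (rule smult_scal_r) (rule D)
    also have "smult (gup j) (\<lambda>C y. \<Sum>k\<in>{0..n}. ck k * smult (spow (theta2 n) k) (H (Suc k)) C y) B x
        = (\<Sum>k\<in>{0..n}. ck k * smult (gup j) (smult (spow (theta2 n) k) (H (Suc k))) B x)"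
      by (rule smult_sum_r) simp
    also have "\<dots> = (\<Sum>k\<in>{0..n}. ck k * X k)"
      unfolding X_def by (simp add: smult_assoc)
    finally show ?thesis using x by simp
  qed
  have Xn: "X n = 0" unfolding X_def by (rule smult_zero_l) (rule gup_spow_n[OF j])
  have T: "(\<Sum>k\<in>{0..n}. ck k * smult (oder j (spow (theta2 n) k)) (H k) B x) = 2 * (\<Sum>k\<in>{0..n}. ck k * X k)"
  proof -
    have h: "ck k * smult (oder j (spow (theta2 n) k)) (H k) B x = (if k = 0 then 0 else 2 * ck (k - 1) * X (k - 1))" for k
    proof (cases k)
      case 0 then show ?thesis by (simp add: oder_spow_gen[OF j] smult_zero_l)
    next
      case (Suc m)
      have "smult (oder j (spow (theta2 n) (Suc m))) (H (Suc m)) B x = real (Suc m) * (-2) * X m"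
        unfolding X_def by (rule smult_scal_l) (simp add: oder_spow_gen[OF j])
      then have "ck (Suc m) * smult (oder j (spow (theta2 n) (Suc m))) (H (Suc m)) B x = (ck (Suc m) * real (Suc m)) * (-2) * X m"
        by (simp only: mult.assoc)
      also have "\<dots> = 2 * ck m * X m" by (simp only: ck_Suc) simp
      finally show ?thesis using Suc by simp
    qed
    show ?thesis
    proof (cases n)
      case 0 then show ?thesis using Xn h[of 0] by simp
    next
      case (Suc n')
      have "(\<Sum>k\<in>{0..n}. ck k * smult (oder j (spow (theta2 n) k)) (H k) B x) = (\<Sum>k\<in>{0..n}. (if k = 0 then 0 else 2 * ck (k - 1) * X (k - 1)))"
        by (rule sum.cong[OF refl h])
      also have "\<dots> = (\<Sum>k\<le>Suc n'. (if k = 0 then 0 else 2 * ck (k - 1) * X (k - 1)))"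
        unfolding Suc atLeast0AtMost ..
      also have "\<dots> = (\<Sum>m\<le>n'. 2 * ck m * X m)" by (subst sum.atMost_Suc_shift) simp
      also have "\<dots> = 2 * (\<Sum>k\<in>{0..n}. ck k * X k)"
        using Xn Suc by (simp add: atLeast0AtMost sum_distrib_left mult.assoc)
      finally show ?thesis .
    qed
  qed
  show ?thesis using L O R T by simp
qed




lemma dir_deriv:
  assumes "g differentiable (at (y + t *\<^sub>R axis i 1))"
  shows "((\<lambda>s. g (y + s *\<^sub>R axis i 1)) has_real_derivative pd i g (y + t *\<^sub>R axis i 1)) (at t)"
proof -
  obtain g' where g': "(g has_derivative g') (at (y + t *\<^sub>R axis i 1))"
    using assms differentiable_def by blast
  show ?thesis using line_deriv[OF g'] pd_hd[OF g'] by simp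
qed

lemma near_nonzero: "(x::'a::real_normed_vector) \<noteq> 0 \<Longrightarrow> norm (y - x) < norm x \<Longrightarrow> y \<noteq> 0"
  by auto

lemma schwarz_approx:
  fixes g :: "real^'m::finite \<Rightarrow> real"
  assumes g: "GG g" and x: "x \<noteq> 0" and e: "e > 0"
  shows "\<exists>d>0. \<forall>h. 0 < h \<and> h < d \<longrightarrow>
     \<bar>(g (x + h *\<^sub>R axis j 1 + h *\<^sub>R axis i 1) - g (x + h *\<^sub>R axis i 1) - g (x + h *\<^sub>R axis j 1) + g x) / h^2
       - pd j (pd i g) x\<bar> < e"
proof -
  let ?u = "axis i (1::real)" and ?v = "axis j (1::real)"
  let ?q = "pd j (pd i g)"
  have "?q differentiable (at x)" using g x by (intro GG_diff GG_pd)
  then have "isCont ?q x" by (rule differentiable_imp_continuous_within)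
  then obtain d0 where d0: "d0 > 0" "\<And>y. dist y x < d0 \<Longrightarrow> dist (?q y) (?q x) < e"
    using e unfolding continuous_at_eps_delta by blast
  define d where "d = min (d0/2) (norm x / 2)"
  have dpos: "d > 0" using d0 x unfolding d_def by simp
  have nz: "y \<noteq> 0" if "norm (y - x) < 2 * d" for y
    using that x unfolding d_def by (intro near_nonzero[OF x]) auto
  have close: "dist y x < d0" if "norm (y - x) < 2 * d" for y
    using that unfolding d_def by (simp add: dist_norm)
  have nrm: "norm (s *\<^sub>R ?u + t *\<^sub>R ?v) < 2 * d" if "0 \<le> s" "s < d" "0 \<le> t" "t < d" for s t
  proof -
    have "norm (s *\<^sub>R ?u + t *\<^sub>R ?v) \<le> norm (s *\<^sub>R ?u) + norm (t *\<^sub>R ?v)" by (rule norm_triangle_ineq)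
    also have "\<dots> = s + t" using that by simp
    finally show ?thesis using that by simp
  qed
  show ?thesis
  proof (intro exI[of _ d] conjI allI impI dpos)
    fix h :: real assume h: "0 < h \<and> h < d"
    define phi where "phi t = g (x + h *\<^sub>R ?v + t *\<^sub>R ?u) - g (x + t *\<^sub>R ?u)" for t
    have "\<exists>z. 0 < z \<and> z < h \<and> phi h - phi 0 = (h - 0) * (pd i g (x + h *\<^sub>R ?v + z *\<^sub>R ?u) - pd i g (x + z *\<^sub>R ?u))"
    proof (rule MVT2)
      fix t assume t: "0 \<le> t" "t \<le> h"
      have a: "x + h *\<^sub>R ?v + t *\<^sub>R ?u \<noteq> 0" using nrm[of t h] t h by (intro nz) (simp add: algebra_simps)
      have b: "x + t *\<^sub>R ?u \<noteq> 0" using nrm[of t 0] t h by (intro nz) (simp add: algebra_simps)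
      show "(phi has_real_derivative (pd i g (x + h *\<^sub>R ?v + t *\<^sub>R ?u) - pd i g (x + t *\<^sub>R ?u))) (at t)"
        unfolding phi_def using a b g
        by (intro DERIV_diff dir_deriv GG_diff) auto
    qed (use h in auto)
    then obtain z where z: "0 < z" "z < h" "phi h - phi 0 = h * (pd i g (x + h *\<^sub>R ?v + z *\<^sub>R ?u) - pd i g (x + z *\<^sub>R ?u))"
      by auto
    define psi where "psi s = pd i g (x + z *\<^sub>R ?u + s *\<^sub>R ?v)" for s
    have "\<exists>w. 0 < w \<and> w < h \<and> psi h - psi 0 = (h - 0) * ?q (x + z *\<^sub>R ?u + w *\<^sub>R ?v)"
    proof (rule MVT2)
      fix s assume s: "0 \<le> s" "s \<le> h"
      have a: "x + z *\<^sub>R ?u + s *\<^sub>R ?v \<noteq> 0" using nrm[of z s] s h z by (intro nz) (simp add: algebra_simps)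
      show "(psi has_real_derivative ?q (x + z *\<^sub>R ?u + s *\<^sub>R ?v)) (at s)"
        unfolding psi_def using a g by (intro dir_deriv GG_diff GG_pd)
    qed (use h in auto)
    then obtain w where w: "0 < w" "w < h" "psi h - psi 0 = h * ?q (x + z *\<^sub>R ?u + w *\<^sub>R ?v)"
      by auto
    have "g (x + h *\<^sub>R ?v + h *\<^sub>R ?u) - g (x + h *\<^sub>R ?u) - g (x + h *\<^sub>R ?v) + g x = phi h - phi 0"
      unfolding phi_def by simp
    also have "\<dots> = h * (psi h - psi 0)" unfolding z(3) psi_def by (simp add: algebra_simps)
    also have "\<dots> = h^2 * ?q (x + z *\<^sub>R ?u + w *\<^sub>R ?v)" unfolding w(3) by (simp add: power2_eq_square)
    finally have D: "(g (x + h *\<^sub>R ?v + h *\<^sub>R ?u) - g (x + h *\<^sub>R ?u) - g (x + h *\<^sub>R ?v) + g x) / h^2 = ?q (x + z *\<^sub>R ?u + w *\<^sub>R ?v)"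
      using h by simp
    have "dist (x + z *\<^sub>R ?u + w *\<^sub>R ?v) x < d0"
      using nrm[of z w] z w h by (intro close) (simp add: algebra_simps)
    then have "dist (?q (x + z *\<^sub>R ?u + w *\<^sub>R ?v)) (?q x) < e" by (rule d0)
    then show "\<bar>(g (x + h *\<^sub>R ?v + h *\<^sub>R ?u) - g (x + h *\<^sub>R ?u) - g (x + h *\<^sub>R ?v) + g x) / h^2 - ?q x\<bar> < e"
      unfolding D by (simp add: dist_real_def)
  qed
qed

lemma schwarz:
  fixes g :: "real^'m::finite \<Rightarrow> real"
  assumes g: "GG g" and x: "x \<noteq> 0"
  shows "pd j (pd i g) x = pd i (pd j g) x"
proof (rule ccontr)
  assume ne: "pd j (pd i g) x \<noteq> pd i (pd j g) x"
  define e where "e = \<bar>pd j (pd i g) x - pd i (pd j g) x\<bar> / 2"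
  have e: "e > 0" using ne unfolding e_def by simp
  obtain d1 where d1: "d1 > 0" "\<And>h. 0 < h \<and> h < d1 \<Longrightarrow>
     \<bar>(g (x + h *\<^sub>R axis j 1 + h *\<^sub>R axis i 1) - g (x + h *\<^sub>R axis i 1) - g (x + h *\<^sub>R axis j 1) + g x) / h^2
       - pd j (pd i g) x\<bar> < e"
    using schwarz_approx[OF g x e, of j i] by blast
  obtain d2 where d2: "d2 > 0" "\<And>h. 0 < h \<and> h < d2 \<Longrightarrow>
     \<bar>(g (x + h *\<^sub>R axis i 1 + h *\<^sub>R axis j 1) - g (x + h *\<^sub>R axis j 1) - g (x + h *\<^sub>R axis i 1) + g x) / h^2
       - pd i (pd j g) x\<bar> < e"
    using schwarz_approx[OF g x e, of i j] by blast
  define h where "h = min d1 d2 / 2"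
  have h: "0 < h \<and> h < d1" "0 < h \<and> h < d2" using d1 d2 unfolding h_def by auto
  have sym: "x + h *\<^sub>R axis i 1 + h *\<^sub>R axis j 1 = x + h *\<^sub>R axis j 1 + h *\<^sub>R axis i 1" by (simp add: algebra_simps)
  let ?D = "(g (x + h *\<^sub>R axis j 1 + h *\<^sub>R axis i 1) - g (x + h *\<^sub>R axis i 1) - g (x + h *\<^sub>R axis j 1) + g x) / h^2"
  have a1: "\<bar>?D - pd j (pd i g) x\<bar> < e" using d1(2)[OF h(1)] .
  have a2: "\<bar>?D - pd i (pd j g) x\<bar> < e" using d2(2)[OF h(2)] unfolding sym by (simp add: algebra_simps)
  have "\<bar>pd j (pd i g) x - pd i (pd j g) x\<bar> < 2 * e" using a1 a2 by linarith
  then show False unfolding e_def by simp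
qed

lemma pd_diff:
  assumes "a differentiable (at x)" "b differentiable (at x)"
  shows "pd i (\<lambda>y. a y - b y) x = pd i a x - pd i b x"
proof -
  have "((\<lambda>y. a y - b y) has_derivative (\<lambda>v. frechet_derivative a (at x) v - frechet_derivative b (at x) v)) (at x)"
    using assms by (intro has_derivative_diff) (simp_all add: frechet_derivative_works[symmetric])
  then show ?thesis using assms by (simp add: pd_hd pd_fd)
qed

lemma pd_cmult: "g differentiable (at x) \<Longrightarrow> pd i (\<lambda>y. c * g y) x = c * pd i g x"
  using pd_mult[of "\<lambda>y. c" x g i] by (simp add: pd_const)

lemma D1_diff:
  assumes "x \<noteq> 0" "GG a" "GG b"
  shows "D1 (\<lambda>y. a y - b y) x = D1 a x - D1 b x"
proof -
  have p: "pd i (\<lambda>y. a y - b y) x = pd i a x - pd i b x" for i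
    using assms by (intro pd_diff) (auto intro: GG_diff)
  show ?thesis unfolding D1_def p by (simp add: sum_subtractf right_diff_distrib diff_divide_distrib)
qed

lemma pd_norm: "x \<noteq> 0 \<Longrightarrow> pd j (\<lambda>y. norm y) x = x$j / norm x"
  using pd_hd[OF has_derivative_norm] by (simp add: inner_axis' sgn_div_norm divide_inverse mult.commute)

lemma pd_D1:
  fixes g :: "real^'m::finite \<Rightarrow> real"
  assumes g: "GG g" and x: "x \<noteq> 0"
  shows "pd j (D1 g) x = D1 (pd j g) x + (1/2) * nu x ^ 2 * pd j g x - 2 * x$j * nu x ^ 2 * D1 g x"
proof -
  define S where "S y = (\<Sum>i\<in>UNIV. 1 * (y$i * pd i g y))" for y
  have GS: "GG S" unfolding S_def using g by (intro GG_lin GG_mult GG_coord GG_pd)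
  have GN: "GG (\<lambda>y. (1/2) * nu y ^ 2)" by (intro GG_scal GG_pow GG_nu)
  have e: "D1 g = (\<lambda>y. (1/2) * nu y ^ 2 * S y)" unfolding S_def by (rule D1_alt)
  have p1: "pd j (\<lambda>y. (1/2) * nu y ^ 2) x = - x$j * nu x ^ 4"
  proof -
    have f: "(\<lambda>y. (1/2) * nu y ^ 2) = (\<lambda>y. (1/2) * (nu y * nu y))" by (simp add: power2_eq_square)
    have "pd j (\<lambda>y. (1/2) * nu y ^ 2) x = (1/2) * pd j (\<lambda>y. nu y * nu y) x"
      unfolding f using x GG_nu by (intro pd_cmult GG_diff GG_mult)
    also have "pd j (\<lambda>y. nu y * nu y) x = pd j nu x * nu x + nu x * pd j nu x"
      using x GG_nu by (intro pd_mult GG_diff)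
    finally show ?thesis using x by (simp add: pd_nu algebra_simps power_numeral_reduce)
  qed
  have p2: "pd j S x = pd j g x + (\<Sum>i\<in>UNIV. 1 * (x$i * pd i (pd j g) x))"
  proof -
    have "pd j S x = (\<Sum>i\<in>UNIV. 1 * pd j (\<lambda>y. y$i * pd i g y) x)"
      unfolding S_def using x g by (intro pd_lin GG_diff GG_mult GG_coord GG_pd)
    also have "\<dots> = (\<Sum>i\<in>UNIV. (if j = i then pd i g x else 0) + x$i * pd j (pd i g) x)"
      using x g by (intro sum.cong refl) (simp add: pd_mult GG_diff GG_coord GG_pd pd_coord)
    also have "\<dots> = pd j g x + (\<Sum>i\<in>UNIV. x$i * pd j (pd i g) x)"
      by (simp add: sum.distrib)
    also have "(\<Sum>i\<in>UNIV. x$i * pd j (pd i g) x) = (\<Sum>i\<in>UNIV. 1 * (x$i * pd i (pd j g) x))"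
      using schwarz[OF g x] by simp
    finally show ?thesis .
  qed
  have m: "pd j (D1 g) x = pd j (\<lambda>y. (1/2) * nu y ^ 2) x * S x + (1/2) * nu x ^ 2 * pd j S x"
    unfolding e using x GS GN by (intro pd_mult GG_diff)
  have e2: "D1 (pd j g) x = (1/2) * nu x ^ 2 * (\<Sum>i\<in>UNIV. 1 * (x$i * pd i (pd j g) x))"
    by (simp add: D1_alt)
  have e1: "D1 g x = (1/2) * nu x ^ 2 * S x" by (simp add: e)
  show ?thesis unfolding m e1 e2 p1 p2 by (simp add: algebra_simps power2_eq_square power4_eq_xxxx)
qed

definition Om :: "'m \<Rightarrow> (real^'m::finite \<Rightarrow> real) \<Rightarrow> real^'m \<Rightarrow> real" where
  "Om j g = (\<lambda>y. norm y * (pd j g y - 2 * y$j * D1 g y))"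

lemma GG_Om: "GG g \<Longrightarrow> GG (Om j g)"
  unfolding Om_def by (intro GG_mult GG_norm GG_diff2 GG_pd GG_coord GG_scal GG_D1)

lemma D1_norm: "x \<noteq> 0 \<Longrightarrow> D1 (\<lambda>y. norm y) x = (1/2) * nu x ^ 2 * norm x"
proof -
  assume x: "x \<noteq> 0"
  have "D1 (\<lambda>y. norm y) x = (1/2) * nu x ^ 2 * ((\<Sum>i\<in>UNIV. x$i * x$i) / norm x)"
    unfolding D1_alt using x by (simp add: pd_norm sum_divide_distrib)
  also have "(\<Sum>i\<in>UNIV. x$i * x$i) = norm x * norm x" using norm_sq[of x] by (simp add: power2_eq_square)
  finally show ?thesis using x by simp
qed

lemma D1_Om:
  fixes g :: "real^'m::finite \<Rightarrow> real"
  assumes g: "GG g" and x: "x \<noteq> 0"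
  shows "D1 (Om j g) x = Om j (D1 g) x"
proof -
  define W where "W y = pd j g y - 2 * y$j * D1 g y" for y
  have GW: "GG W" unfolding W_def using g by (intro GG_diff2 GG_pd GG_mult GG_scal GG_coord GG_D1)
  have "D1 (Om j g) x = D1 (\<lambda>y. norm y) x * W x + norm x * D1 W x"
    unfolding Om_def W_def[symmetric] using x GW by (intro D1_mult GG_norm)
  moreover have "D1 W x = D1 (pd j g) x - D1 (\<lambda>y. (2 * y$j) * D1 g y) x"
    unfolding W_def using x g by (intro D1_diff GG_pd GG_mult GG_scal GG_coord GG_D1)
  moreover have "D1 (\<lambda>y. (2 * y$j) * D1 g y) x = D1 (\<lambda>y. 2 * y$j) x * D1 g x + 2 * x$j * D1 (D1 g) x"
    using x g by (intro D1_mult GG_scal GG_coord GG_D1)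
  moreover have "D1 (\<lambda>y. 2 * y$j) x = 2 * ((1/2) * nu x ^ 2 * x$j)"
    using x by (simp add: D1_cmult GG_coord D1_coord)
  moreover have "Om j (D1 g) x = norm x * (pd j (D1 g) x - 2 * x$j * D1 (D1 g) x)" by (simp add: Om_def)
  moreover have "W x = pd j g x - 2 * x$j * D1 g x" by (simp add: W_def)
  ultimately show ?thesis
    using pd_D1[OF g x, of j] D1_norm[OF x] by (simp add: algebra_simps)
qed

lemma D1k_Om: "GG g \<Longrightarrow> eqU ((D1 ^^ k) (Om j g)) (Om j ((D1 ^^ k) g))"
proof (induction k)
  case 0 then show ?case by simp
next
  case (Suc k)
  have "eqU (D1 ((D1 ^^ k) (Om j g))) (D1 (Om j ((D1 ^^ k) g)))" by (rule D1_cong[OF Suc.IH[OF Suc.prems]])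
  moreover have "eqU (D1 (Om j ((D1 ^^ k) g))) (Om j ((D1 ^^ Suc k) g))"
    unfolding eqU_def using Suc.prems by (auto intro!: D1_Om GG_D1k)
  ultimately show ?case by (auto intro: eqU_trans)
qed

lemma smult_diff_l: "smult (\<lambda>C y. F C y - G C y) H B x = smult F H B x - smult G H B x"
  unfolding smult_def by (simp add: sum_subtractf[symmetric] algebra_simps)

lemma Om_phi:
  assumes F: "sG F" and x: "x \<noteq> 0"
  shows "Om j (phi n F B) x = phi n (\<lambda>C. Om j (F C)) B x"
proof -
  define G where "G k = (\<lambda>C. (D1 ^^ k) (F C))" for k
  have GG: "GG (G k C)" for k C using F unfolding sG_def G_def by (intro GG_D1k) auto
  have o: "Om j (phi n F B) x = norm x * (pd j (phi n F B) x - 2 * x$j * D1 (phi n F B) x)"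
    by (simp add: Om_def)
  have p1: "pd j (phi n F B) x = (\<Sum>k\<in>{0..n}. ck k * smult (spow (theta2 n) k) (\<lambda>C. pd j (G k C)) B x)"
    unfolding G_def by (rule pd_phi[OF F x])
  have d1: "D1 (phi n F B) x = (\<Sum>k\<in>{0..n}. ck k * smult (spow (theta2 n) k) (\<lambda>C. D1 (G k C)) B x)"
  proof -
    have "D1 (phi n F B) x = phi n (\<lambda>C. D1 (F C)) B x" by (rule D1_phi[OF F x])
    also have "\<dots> = (\<Sum>k\<in>{0..n}. ck k * smult (spow (theta2 n) k) (\<lambda>C. D1 (G k C)) B x)"
      unfolding phi_eq G_def by (simp add: funpow_swap1)
    finally show ?thesis .
  qed
  have L: "Om j (phi n F B) x = (\<Sum>k\<in>{0..n}. ck k * (norm x * (smult (spow (theta2 n) k) (\<lambda>C. pd j (G k C)) B x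
       - (2 * x$j) * smult (spow (theta2 n) k) (\<lambda>C. D1 (G k C)) B x)))"
    unfolding o p1 d1 by (simp add: sum_distrib_left sum_subtractf[symmetric] algebra_simps)
  have R: "phi n (\<lambda>C. Om j (F C)) B x = (\<Sum>k\<in>{0..n}. ck k * smult (spow (theta2 n) k) (\<lambda>C. Om j (G k C)) B x)"
    unfolding phi_eq G_def
  proof (intro sum.cong refl arg_cong2[where f="(*)"] smult_cong_r)
    fix k C
    show "(D1 ^^ k) (Om j (F C)) x = Om j ((D1 ^^ k) (F C)) x"
      using D1k_Om[of "F C" k j] F x unfolding sG_def eqU_def by blast
  qed
  have T: "smult (spow (theta2 n) k) (\<lambda>C. Om j (G k C)) B x = norm x * (smult (spow (theta2 n) k) (\<lambda>C. pd j (G k C)) B x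
       - (2 * x$j) * smult (spow (theta2 n) k) (\<lambda>C. D1 (G k C)) B x)" for k
  proof -
    have "smult (spow (theta2 n) k) (\<lambda>C. Om j (G k C)) B x = norm x * smult (spow (theta2 n) k) (\<lambda>C y. pd j (G k C) y - (2 * x$j) * D1 (G k C) y) B x"
      by (rule smult_scal_r) (simp add: Om_def)
    also have "smult (spow (theta2 n) k) (\<lambda>C y. pd j (G k C) y - (2 * x$j) * D1 (G k C) y) B x
       = smult (spow (theta2 n) k) (\<lambda>C. pd j (G k C)) B x - smult (spow (theta2 n) k) (\<lambda>C y. (2 * x$j) * D1 (G k C) y) B x"
      by (rule smult_diff_r) simp
    also have "smult (spow (theta2 n) k) (\<lambda>C y. (2 * x$j) * D1 (G k C) y) B x = (2 * x$j) * smult (spow (theta2 n) k) (\<lambda>C. D1 (G k C)) B x"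
      by (rule smult_scal_r) simp
    finally show ?thesis .
  qed
  show ?thesis unfolding L R T ..
qed

lemma phi_add:
  assumes "sG F1" "sG F2" "x \<noteq> 0"
  shows "phi n (\<lambda>C y. F1 C y + F2 C y) B x = phi n F1 B x + phi n F2 B x"
proof -
  have e: "(\<lambda>C y. F1 C y + F2 C y) = (\<lambda>C y. \<Sum>b\<in>{True,False}. 1 * (if b then F1 else F2) C y)"
    by (intro ext) simp
  show ?thesis unfolding e using assms by (subst phi_lin) auto
qed

lemma Sfac_diff:
  assumes x: "x \<noteq> 0"
  shows "Sfac n (1/2) C x - Sfac n (-1/2) C x = - (nu x ^ 2) * smult (theta2 n) (Sfac n (-1/2)) C x"
proof -
  define coef where "coef a = ((-1/2::real) gchoose a) * (-1)^a / (norm x)^(2*a)" for a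
  define P where "P k = spow (theta2 n) k C x" for k
  have g: "((1/2::real) gchoose Suc m) - ((-1/2) gchoose Suc m) = ((-1/2) gchoose m)" for m
    using gbinomial_Suc_Suc[of "-1/2::real" m] by simp
  have R: "smult (theta2 n) (Sfac n (-1/2)) C x = (\<Sum>a\<in>{0..n}. coef a * P (Suc a))"
  proof -
    have "smult (theta2 n) (Sfac n (-1/2)) C x = (\<Sum>a\<in>{0..n}. coef a * smult (theta2 n) (spow (theta2 n) a) C x)"
      by (rule smult_sum_r) (simp add: Sfac_def coef_def)
    then show ?thesis by (simp add: P_def spow_Suc)
  qed
  have L: "Sfac n (1/2) C x - Sfac n (-1/2) C x = (\<Sum>b\<in>{0..n}. (((1/2::real) gchoose b) - ((-1/2) gchoose b)) * (-1)^b / (norm x)^(2*b) * P b)"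
    unfolding Sfac_def P_def by (simp add: sum_subtractf[symmetric] algebra_simps diff_divide_distrib)
  have t: "(((1/2::real) gchoose Suc m) - ((-1/2) gchoose Suc m)) * (-1)^(Suc m) / (norm x)^(2*Suc m) * P (Suc m)
      = - (nu x ^ 2) * (coef m * P (Suc m))" for m
    unfolding g coef_def using x by (simp add: nu_def field_simps power_add power2_eq_square)
  have Pz: "P (Suc n) = 0" unfolding P_def by (rule spow_vanish) simp
  show ?thesis
  proof (cases n)
    case 0
    then show ?thesis unfolding L R using Pz by simp
  next
    case (Suc n')
    have "Sfac n (1/2) C x - Sfac n (-1/2) C x = (\<Sum>b\<le>Suc n'. (((1/2::real) gchoose b) - ((-1/2) gchoose b)) * (-1)^b / (norm x)^(2*b) * P b)"
      using L unfolding Suc atLeast0AtMost .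
    also have "\<dots> = (\<Sum>m\<le>n'. - (nu x ^ 2) * (coef m * P (Suc m)))"
      by (subst sum.atMost_Suc_shift, simp only: t, simp)
    also have "\<dots> = - (nu x ^ 2) * (\<Sum>a\<in>{0..n}. coef a * P (Suc a))"
      using Pz unfolding Suc atLeast0AtMost by (simp add: sum_distrib_left)
    finally show ?thesis unfolding R .
  qed
qed

lemma alg1: "(nv::real) * nm = 1 \<Longrightarrow> (2 * xj) * a + nv * (nm * (b - (2 * xj) * c)) = b + 2 * xj * (a - c)"
proof -
  assume h: "nv * nm = 1"
  have "nv * (nm * (b - (2 * xj) * c)) = (nv * nm) * (b - (2 * xj) * c)" by (simp only: mult.assoc)
  then show ?thesis unfolding h by (simp add: algebra_simps)
qed

lemma alg2: "(nm::real) \<noteq> 0 \<Longrightarrow> b + 2 * xj * (- (1 / nm ^ 2) * T) = b - xj / nm ^ 3 * ((2 * nm) * T)"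
  by (simp add: field_simps power2_eq_square power3_eq_cube)

lemma claim3:
  fixes f :: "'m::finite sfun"
  assumes f: "sG f" and x: "x \<noteq> 0"
  shows "phi n (epd j f) A x = smult (isqrtfac n) (epd j (phi n f)) A x
          - x$j / (norm x)^3 * smult (smult (theta2 n) (isqrtfac n)) (dr (phi n f)) A x"
proof -
  define Y where "Y = phi n (\<lambda>C. D1 (f C))"
  define Z where "Z = epd j (phi n f)"
  define Sm where "Sm = (Sfac n (-1/2) :: 'm sfun)"
  define Sp where "Sp = (Sfac n (1/2) :: 'm sfun)"
  have sD: "sG (\<lambda>C. D1 (f C))" using f unfolding sG_def by (auto intro: GG_D1)
  have sO: "sG (\<lambda>C. Om j (f C))" using f unfolding sG_def by (auto intro: GG_Om)
  have sA: "sG (\<lambda>C y. (2 * y$j) * D1 (f C) y)" using f unfolding sG_def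
    by (auto intro!: GG_mult GG_scal GG_coord GG_D1)
  have sB: "sG (\<lambda>C y. nu y * Om j (f C) y)" using f unfolding sG_def
    by (auto intro!: GG_mult GG_nu GG_Om)
  have e1: "eqU (epd j f C) (\<lambda>y. (2 * y$j) * D1 (f C) y + nu y * Om j (f C) y)" for C
    unfolding eqU_def epd_def Om_def by (auto simp: nu_def field_simps)
  have s1: "phi n (epd j f) A x = phi n (\<lambda>C y. (2 * y$j) * D1 (f C) y) A x + phi n (\<lambda>C y. nu y * Om j (f C) y) A x"
    using phi_cong[OF e1 x, where n=n and B=A] phi_add[OF sA sB x, where n=n and B=A] by simp
  have dA: "eqU (D1 (\<lambda>y. 2 * y$j)) (\<lambda>y. (1/2) * nu y ^ 2 * (2 * y$j))"
    unfolding eqU_def by (simp add: D1_cmult GG_coord D1_coord)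
  have s2: "phi n (\<lambda>C y. (2 * y$j) * D1 (f C) y) A x = (2 * x$j) * smult Sp Y A x"
    unfolding Sp_def Y_def
    using phi_mult[OF GG_scal[OF GG_coord] dA sD x, where n=n and B=A] by simp
  have dN: "eqU (D1 nu) (\<lambda>y. (-1/2) * nu y ^ 2 * nu y)"
    unfolding eqU_def by (simp add: D1_nu)
  have s3: "phi n (\<lambda>C y. nu y * Om j (f C) y) A x = nu x * smult Sm (phi n (\<lambda>C. Om j (f C))) A x"
    unfolding Sm_def using phi_mult[OF GG_nu dN sO x, where n=n and B=A] by simp
  have YC: "D1 (phi n f C) x = Y C x" for C unfolding Y_def by (rule D1_phi[OF f x])
  have s4: "smult Sm (phi n (\<lambda>C. Om j (f C))) A x = norm x * (smult Sm Z A x - (2 * x$j) * smult Sm Y A x)"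
  proof -
    have "smult Sm (phi n (\<lambda>C. Om j (f C))) A x = norm x * smult Sm (\<lambda>C y. Z C y - (2 * x$j) * Y C y) A x"
    proof (rule smult_scal_r)
      fix C
      have "phi n (\<lambda>C. Om j (f C)) C x = Om j (phi n f C) x" by (rule Om_phi[OF f x, symmetric])
      also have "\<dots> = norm x * (Z C x - (2 * x$j) * Y C x)"
        unfolding Om_def Z_def epd_def YC by simp
      finally show "phi n (\<lambda>C. Om j (f C)) C x = norm x * (Z C x - (2 * x$j) * Y C x)" .
    qed
    also have "smult Sm (\<lambda>C y. Z C y - (2 * x$j) * Y C y) A x = smult Sm Z A x - smult Sm (\<lambda>C y. (2 * x$j) * Y C y) A x"
      by (rule smult_diff_r) simp
    also have "smult Sm (\<lambda>C y. (2 * x$j) * Y C y) A x = (2 * x$j) * smult Sm Y A x"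
      by (rule smult_scal_r) simp
    finally show ?thesis .
  qed
  have s5: "smult (smult (theta2 n) Sm) (dr (phi n f)) A x = (2 * norm x) * smult (smult (theta2 n) Sm) Y A x"
    by (rule smult_scal_r) (simp add: dr_eq R1_D1[OF x] YC)
  have s6: "smult Sp Y A x - smult Sm Y A x = - (nu x ^ 2) * smult (smult (theta2 n) Sm) Y A x"
  proof -
    have "smult Sp Y A x - smult Sm Y A x = smult (\<lambda>C y. Sp C y - Sm C y) Y A x"
      by (rule smult_diff_l[symmetric])
    also have "\<dots> = - (nu x ^ 2) * smult (smult (theta2 n) Sm) Y A x"
      by (rule smult_scal_l) (unfold Sp_def Sm_def, rule Sfac_diff[OF x])
    finally show ?thesis .
  qed
  have nn: "nu x * norm x = 1" "nu x ^ 2 = 1 / norm x ^ 2" using x by (simp_all add: nu_def power_one_over)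
  have "phi n (epd j f) A x = smult Sm Z A x + 2 * x$j * (smult Sp Y A x - smult Sm Y A x)"
    unfolding s1 s2 s3 s4 by (rule alg1[OF nn(1)])
  also have "\<dots> = smult Sm Z A x - x$j / (norm x)^3 * ((2 * norm x) * smult (smult (theta2 n) Sm) Y A x)"
    unfolding s6 nn(2) using x by (intro alg2) simp
  finally have eq: "phi n (epd j f) A x = smult Sm Z A x - x$j / (norm x)^3 * ((2 * norm x) * smult (smult (theta2 n) Sm) Y A x)" .
  have r1: "smult (smult (theta2 n) (isqrtfac n)) (dr (phi n f)) A x = (2 * norm x) * smult (smult (theta2 n) Sm) Y A x"
    using s5 by (simp add: Sm_def isqrtfac_Sfac)
  have r2: "smult (isqrtfac n) (epd j (phi n f)) A x = smult Sm Z A x" by (simp add: Sm_def Z_def isqrtfac_Sfac)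
  show ?thesis unfolding r1 r2 by (rule eq)
qed


theorem lemma5p4:
  fixes n :: nat and f :: "'m::finite sfun"
  assumes "superfun n f"
  shows "(\<forall>j::'m. \<forall>A x. x \<noteq> 0 \<longrightarrow>
            phi n (sxmul j f) A x = x$j * smult (sqrtfac n) (phi n f) A x)
       \<and> (\<forall>j\<in>{1..2*n}. \<forall>A x. x \<noteq> 0 \<longrightarrow>
            phi n (smult (gen j) f) A x = smult (gen j) (phi n f) A x)
       \<and> (\<forall>j::'m. \<forall>A x. x \<noteq> 0 \<longrightarrow>
            phi n (epd j f) A x =
              smult (isqrtfac n) (epd j (phi n f)) A x
              - x$j / (norm x)^3 * smult (smult (theta2 n) (isqrtfac n)) (dr (phi n f)) A x)
       \<and> (\<forall>j\<in>{1..2*n}. \<forall>A x. x \<noteq> 0 \<longrightarrow>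
            phi n (oder j f) A x =
              oder j (phi n f) A x - 1 / norm x * smult (gup j) (dr (phi n f)) A x)"
proof -
  have f: "sG f" using assms by (rule superfun_sG)
  show ?thesis using claim1[OF f] claim2[OF f] claim3[OF f] claim4[OF f] by blast
qed

end
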